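(* Let $t=t(n)=o(n)$ with $t\to\infty$, fix $N\in\mathbb N$ and $k_1,\dots,k_N\in\mathbb N$, and let $F=F(n,t)$ be uniform on $\mathcal F(n,t)$. For $i\in[t]$ let $F_i$ be the tree component of $F$ containing vertex $i$. Then $$\Pr\big[\forall i\in[N]: |V(F_i)|=k_i\big]=(1+o(1))\prod_{i=1}^N \frac{e^{-k_i}k_i^{k_i-1}}{k_i!}.$$
   Context: $\mathcal F(n,t)$ is the class of forests on vertex set $[n]$ with exactly $t$ tree components such that the vertices $1,\dots,t$ lie in distinct components. *)

theory Defs
  imports Complex_Main "HOL-Library.Landau_Symbols"
begin

definition graph_edges :: "nat \<Rightarrow> nat set set" where
  "graph_edges n = {e. e \<subseteq> {1..n} \<and> card e = 2}"

definition has_cycle :: "nat set set \<Rightarrow> bool" where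
  "has_cycle E \<longleftrightarrow> (\<exists>vs. 3 \<le> length vs \<and> distinct vs \<and>
      (\<forall>i < length vs. {vs ! i, vs ! ((i + 1) mod length vs)} \<in> E))"

definition reach :: "nat set set \<Rightarrow> nat \<Rightarrow> nat \<Rightarrow> bool" where
  "reach E u v \<longleftrightarrow> (u, v) \<in> {(x, y). {x, y} \<in> E}\<^sup>*"

definition component :: "nat \<Rightarrow> nat set set \<Rightarrow> nat \<Rightarrow> nat set" where
  "component n E v = {u \<in> {1..n}. reach E v u}"

definition is_forest :: "nat \<Rightarrow> nat set set \<Rightarrow> bool" where
  "is_forest n E \<longleftrightarrow> E \<subseteq> graph_edges n \<and> \<not> has_cycle E"

definition num_components :: "nat \<Rightarrow> nat set set \<Rightarrow> nat" where
  "num_components n E = card (component n E ` {1..n})"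

definition forest_class :: "nat \<Rightarrow> nat \<Rightarrow> nat set set set" where
  "forest_class n t = {E. is_forest n E \<and> num_components n E = t \<and>
      (\<forall>i\<in>{1..t}. \<forall>j\<in>{1..t}. i \<noteq> j \<longrightarrow> \<not> reach E i j)}"

definition comp_size_prob :: "nat \<Rightarrow> nat \<Rightarrow> nat \<Rightarrow> (nat \<Rightarrow> nat) \<Rightarrow> real" where
  "comp_size_prob n t N k =
     real (card {E \<in> forest_class n t. \<forall>i\<in>{1..N}. card (component n E i) = k i})
     / real (card (forest_class n t))"

end

theory Submission
  imports Defs
begin


lemma reach_refl[simp]: "reach E u u"
  by (simp add: reach_def)

lemma reach_edge: "{u,v} \<in> E \<Longrightarrow> reach E u v"
  by (auto simp: reach_def)

lemma reach_trans: "reach E u v \<Longrightarrow> reach E v w \<Longrightarrow> reach E u w"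
  unfolding reach_def by (rule rtrancl_trans)

lemma reach_sym: "reach E u v \<Longrightarrow> reach E v u"
proof -
  have s: "{(x, y). {x, y} \<in> E}\<inverse> = {(x, y). {x, y} \<in> E}"
    by (auto simp: insert_commute)
  assume "reach E u v"
  then have "(v,u) \<in> ({(x, y). {x, y} \<in> E}\<inverse>)\<^sup>*"
    unfolding reach_def by (simp add: rtrancl_converse)
  then show ?thesis unfolding reach_def s .
qed

lemma reach_mono: "E \<subseteq> E' \<Longrightarrow> reach E u v \<Longrightarrow> reach E' u v"
  unfolding reach_def by (erule rtrancl_mono[THEN subsetD, rotated]) auto

lemma reach_induct[consumes 1, case_names refl step]:
  assumes "reach E u w" "P u"
    "\<And>w w'. reach E u w \<Longrightarrow> {w,w'} \<in> E \<Longrightarrow> P w \<Longrightarrow> P w'"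
  shows "P w"
  using assms(1) unfolding reach_def
proof (induction rule: rtrancl_induct)
  case base then show ?case using assms(2) by simp
next
  case (step y z) then show ?case using assms(3)[of y z] by (auto simp: reach_def)
qed

lemma reach_end: "reach E u w \<Longrightarrow> u \<noteq> w \<Longrightarrow> \<exists>e\<in>E. w \<in> e"
proof -
  assume "reach E u w" "u \<noteq> w"
  have "u = w \<or> (\<exists>e\<in>E. w \<in> e)" using \<open>reach E u w\<close>
    by (induction rule: reach_induct) auto
  then show ?thesis using \<open>u\<noteq>w\<close> by simp
qed

lemma reach_start: "reach E u w \<Longrightarrow> u \<noteq> w \<Longrightarrow> \<exists>e\<in>E. u \<in> e"
  using reach_end[OF reach_sym] by metis

definition walk :: "nat set set \<Rightarrow> nat list \<Rightarrow> bool" where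
  "walk G xs \<longleftrightarrow> (\<forall>i. Suc i < length xs \<longrightarrow> {xs!i, xs!(Suc i)} \<in> G)"

lemma reach_walk:
  assumes "reach G x y"
  shows "\<exists>xs. xs \<noteq> [] \<and> hd xs = x \<and> last xs = y \<and> distinct xs \<and> walk G xs"
  using assms
proof (induction rule: reach_induct)
  case refl then show ?case by (intro exI[of _ "[x]"]) (auto simp: walk_def)
next
  case (step w w')
  then obtain xs where xs: "xs \<noteq> []" "hd xs = x" "last xs = w" "distinct xs" "walk G xs" by blast
  show ?case
  proof (cases "w' \<in> set xs")
    case True
    then obtain ys zs where yz: "xs = ys @ w' # zs" by (meson split_list)
    show ?thesis
    proof (intro exI[of _ "ys @ [w']"] conjI)
      show "hd (ys @ [w']) = x" using xs(2) yz by (cases ys) auto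
      show "distinct (ys @ [w'])" using xs(4) yz by auto
      show "walk G (ys @ [w'])" using xs(5) unfolding walk_def yz
      proof (intro allI impI)
        fix i assume a: "\<forall>i. Suc i < length (ys @ w' # zs) \<longrightarrow>
          {(ys @ w' # zs) ! i, (ys @ w' # zs) ! Suc i} \<in> G" and b: "Suc i < length (ys @ [w'])"
        have "{(ys @ w' # zs) ! i, (ys @ w' # zs) ! Suc i} \<in> G" using a b by auto
        moreover have "(ys @ w' # zs) ! i = (ys @ [w']) ! i" using b by (simp add: nth_append)
        moreover have "(ys @ w' # zs) ! Suc i = (ys @ [w']) ! Suc i" using b by (simp add: nth_append)
        ultimately show "{(ys @ [w']) ! i, (ys @ [w']) ! Suc i} \<in> G" by simp
      qed
    qed auto
  next
    case False
    show ?thesis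
    proof (intro exI[of _ "xs @ [w']"] conjI)
      show "hd (xs @ [w']) = x" using xs by simp
      show "distinct (xs @ [w'])" using xs False by simp
      show "walk G (xs @ [w'])" unfolding walk_def
      proof (intro allI impI)
        fix i assume b: "Suc i < length (xs @ [w'])"
        show "{(xs @ [w']) ! i, (xs @ [w']) ! Suc i} \<in> G"
        proof (cases "Suc i < length xs")
          case True
          then show ?thesis using xs(5) by (simp add: walk_def nth_append)
        next
          case False
          then have "i = length xs - 1" "Suc i = length xs" using b by auto
          moreover have "xs ! (length xs - 1) = w" using xs(1,3) by (simp add: last_conv_nth)
          ultimately show ?thesis using step(2) by (simp add: nth_append)
        qed
      qed
    qed auto
  qed
qed

definition acyc :: "nat set set \<Rightarrow> bool" where
  "acyc E \<longleftrightarrow> (\<forall>x y. {x,y} \<in> E \<longrightarrow> x \<noteq> y \<longrightarrow> \<not> reach (E - {{x,y}}) x y)"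

lemma bridge_cycle:
  assumes "{x,y} \<in> E" "x \<noteq> y" "reach (E - {{x,y}}) x y"
  shows "has_cycle E"
proof -
  obtain xs where xs: "xs \<noteq> []" "hd xs = x" "last xs = y" "distinct xs" "walk (E - {{x,y}}) xs"
    using reach_walk[OF assms(3)] by blast
  have l2: "length xs \<ge> 2"
  proof (rule ccontr)
    assume "\<not> length xs \<ge> 2"
    then have "length xs = 1" using xs(1) by (cases xs) (auto simp: not_le)
    then have "hd xs = last xs" by (cases xs) auto
    then show False using xs assms by simp
  qed
  have h0: "xs ! 0 = x" using xs by (simp add: hd_conv_nth)
  have hl: "xs ! (length xs - 1) = y" using xs by (simp add: last_conv_nth)
  have l3: "length xs \<ge> 3"
  proof (rule ccontr)
    assume "\<not> length xs \<ge> 3"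
    then have "length xs = 2" using l2 by simp
    then have "{xs!0, xs!1} \<in> E - {{x,y}}" using xs(5) by (auto simp: walk_def)
    then show False using h0 hl \<open>length xs = 2\<close> by simp
  qed
  show ?thesis unfolding has_cycle_def
  proof (intro exI[of _ xs] conjI allI impI)
    fix i assume i: "i < length xs"
    show "{xs ! i, xs ! ((i + 1) mod length xs)} \<in> E"
    proof (cases "Suc i < length xs")
      case True
      then show ?thesis using xs(5) by (auto simp: walk_def)
    next
      case False
      then have "i = length xs - 1" "Suc i = length xs" using i by auto
      then have "(i+1) mod length xs = 0" by simp
      then show ?thesis using h0 hl assms(1) \<open>i = length xs - 1\<close> by (simp add: insert_commute)
    qed
  qed (use l3 xs in auto)
qed

lemma dnth: "distinct xs \<Longrightarrow> i < length xs \<Longrightarrow> j < length xs \<Longrightarrow> xs!i = xs!j \<Longrightarrow> i = j"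
  by (simp add: nth_eq_iff_index_eq)

lemma cycle_bridge:
  assumes "has_cycle E"
  shows "\<exists>x y. {x,y} \<in> E \<and> x \<noteq> y \<and> reach (E - {{x,y}}) x y"
proof -
  obtain vs where vs: "3 \<le> length vs" "distinct vs"
    "\<And>i. i < length vs \<Longrightarrow> {vs ! i, vs ! ((i + 1) mod length vs)} \<in> E"
    using assms unfolding has_cycle_def by blast
  define m where "m = length vs"
  define G where "G = E - {{vs!0, vs!1}}"
  have e01: "{vs!0, vs!1} \<in> E" using vs(3)[of 0] vs(1) by force
  have ne: "vs!0 \<noteq> vs!1" using vs(1,2) nth_eq_iff_index_eq[of vs 0 1] by force
  have step: "{vs!j, vs!Suc j} \<in> G" if "1 \<le> j" "Suc j < m" for j
  proof -
    have "{vs!j, vs!Suc j} \<in> E" using vs(3)[of j] that by (simp add: m_def)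
    moreover have "{vs!j, vs!Suc j} \<noteq> {vs!0, vs!1}"
    proof
      assume a: "{vs!j, vs!Suc j} = {vs!0, vs!1}"
      have "vs!Suc j \<in> {vs!0, vs!1}" using a by blast
      then consider "vs!Suc j = vs!0" | "vs!Suc j = vs!1" by blast
      then have "Suc j = 0 \<or> Suc j = 1"
      proof cases
        case 1 have "Suc j = 0" by (rule dnth[OF vs(2) _ _ 1]) (use that in \<open>auto simp: m_def\<close>)
        then show ?thesis by simp
      next
        case 2 have "Suc j = 1" by (rule dnth[OF vs(2) _ _ 2]) (use that in \<open>auto simp: m_def\<close>)
        then show ?thesis by simp
      qed
      then show False using that by simp
    qed
    ultimately show ?thesis by (simp add: G_def)
  qed
  have r: "reach G (vs!1) (vs!j)" if "1 \<le> j" "j < m" for j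
    using that
  proof (induction j)
    case 0 then show ?case by simp
  next
    case (Suc j)
    show ?case
    proof (cases "j = 0")
      case True then show ?thesis by simp
    next
      case False
      then have "reach G (vs!1) (vs!j)" using Suc by simp
      then show ?thesis using reach_trans reach_edge step[of j] Suc False by auto
    qed
  qed
  have last: "{vs!(m-1), vs!0} \<in> G"
  proof -
    have "Suc (m-1) = m" using vs(1) by (simp add: m_def)
    then have "Suc (m-1) mod m = 0" by simp
    then have "{vs!(m-1), vs!0} \<in> E" using vs(3)[of "m-1"] vs(1) by (simp add: m_def)
    moreover have "{vs!(m-1), vs!0} \<noteq> {vs!0, vs!1}"
    proof
      assume a: "{vs!(m-1), vs!0} = {vs!0, vs!1}"
      have "vs!(m-1) \<in> {vs!0, vs!1}" using a by blast
      then consider "vs!(m-1) = vs!0" | "vs!(m-1) = vs!1" by blast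
      then have "m - 1 = 0 \<or> m - 1 = 1"
      proof cases
        case 1 have "m-1 = 0" by (rule dnth[OF vs(2) _ _ 1]) (use vs(1) in \<open>auto simp: m_def\<close>)
        then show ?thesis by simp
      next
        case 2 have "m-1 = 1" by (rule dnth[OF vs(2) _ _ 2]) (use vs(1) in \<open>auto simp: m_def\<close>)
        then show ?thesis by simp
      qed
      then show False using vs(1) by (simp add: m_def)
    qed
    ultimately show ?thesis by (simp add: G_def)
  qed
  have "reach G (vs!1) (vs!0)"
    using reach_trans[OF r[of "m-1"] reach_edge[OF last]] vs(1) by (simp add: m_def)
  then have "reach G (vs!0) (vs!1)" by (rule reach_sym)
  then show ?thesis using e01 ne unfolding G_def by blast
qed

lemma acyc_iff: "\<not> has_cycle E \<longleftrightarrow> acyc E"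
  unfolding acyc_def using bridge_cycle cycle_bridge by blast

lemma acyc_mono: "acyc E \<Longrightarrow> E' \<subseteq> E \<Longrightarrow> acyc E'"
  unfolding acyc_def by (meson Diff_mono order_refl reach_mono subsetD)


definition pairs :: "nat set \<Rightarrow> nat set set" where
  "pairs V = {e. e \<subseteq> V \<and> card e = 2}"

definition RF :: "nat set \<Rightarrow> nat set \<Rightarrow> nat set set set" where
  "RF V R = {E. E \<subseteq> pairs V \<and> acyc E \<and> (\<forall>u\<in>V. \<exists>!r\<in>R. reach E u r)}"

definition star :: "nat \<Rightarrow> nat set \<Rightarrow> nat set set" where
  "star v S = (\<lambda>s. {v,s}) ` S"

lemma exu: "\<exists>!r\<in>R. P r \<Longrightarrow> a\<in>R \<Longrightarrow> P a \<Longrightarrow> b\<in>R \<Longrightarrow> P b \<Longrightarrow> a = b"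
  by blast

lemma ex1_bex: "\<exists>!r\<in>R. P r \<Longrightarrow> (\<And>r. r \<in> R \<Longrightarrow> P r \<Longrightarrow> thesis) \<Longrightarrow> thesis"
  by blast

lemma reach_nov: "\<forall>e\<in>H. v \<notin> e \<Longrightarrow> reach H u v \<Longrightarrow> u = v"
  using reach_end by blast

lemma reach_star:
  fixes S :: "nat set"
  assumes H: "\<forall>e\<in>H. v \<notin> e"
  defines "C \<equiv> insert v {x. \<exists>s\<in>S. reach H s x}"
  shows "reach (H \<union> star v S) u w \<longleftrightarrow> reach H u w \<or> (u \<in> C \<and> w \<in> C)"
proof
  assume "reach (H \<union> star v S) u w"
  then show "reach H u w \<or> (u \<in> C \<and> w \<in> C)"
  proof (induction rule: reach_induct)
    case refl then show ?case by simp
  next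
    case (step w w')
    show ?case
    proof (cases "{w,w'} \<in> H")
      case True
      show ?thesis
      proof (cases "reach H u w")
        case True
        then show ?thesis using \<open>{w,w'} \<in> H\<close> reach_trans reach_edge by blast
      next
        case False
        then have "u \<in> C" "w \<in> C" using step by auto
        have "w \<noteq> v" using H \<open>{w,w'} \<in> H\<close> by blast
        then obtain s where "s \<in> S" "reach H s w" using \<open>w \<in> C\<close> by (auto simp: C_def)
        then have "reach H s w'" using \<open>{w,w'} \<in> H\<close> reach_trans reach_edge by blast
        then show ?thesis using \<open>u \<in> C\<close> \<open>s \<in> S\<close> by (auto simp: C_def)
      qed
    next
      case False
      then obtain s where s: "s \<in> S" "{w,w'} = {v,s}" using step(2) by (auto simp: star_def)
      have sC: "s \<in> C" using s(1) by (auto simp: C_def intro: bexI[of _ s])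
      have w'C: "w' \<in> C" using s sC by (auto simp: C_def doubleton_eq_iff)
      have wC: "w \<in> C" using s sC by (auto simp: C_def doubleton_eq_iff)
      have "u \<in> C"
      proof (cases "reach H u w")
        case True
        show ?thesis
        proof (cases "w = v")
          case True
          then show ?thesis using reach_nov[OF H] \<open>reach H u w\<close> by (simp add: C_def)
        next
          case False
          then have "w = s" using s by (auto simp: doubleton_eq_iff)
          then show ?thesis using \<open>reach H u w\<close> s(1) reach_sym by (auto simp: C_def)
        qed
      next
        case False then show ?thesis using step by auto
      qed
      then show ?thesis using w'C by simp
    qed
  qed
next
  assume a: "reach H u w \<or> (u \<in> C \<and> w \<in> C)"
  have toV: "reach (H \<union> star v S) x v" if xC: "x \<in> C" for x
  proof (cases "x = v")
    case True then show ?thesis by simp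
  next
    case False
    then obtain s where s: "s \<in> S" "reach H s x" using xC by (auto simp: C_def)
    have "reach (H \<union> star v S) x s" using reach_mono[OF _ reach_sym[OF s(2)]] by blast
    moreover have "{s,v} \<in> H \<union> star v S" using s(1) by (auto simp: star_def insert_commute)
    ultimately show ?thesis using reach_trans reach_edge by blast
  qed
  show "reach (H \<union> star v S) u w"
    using a
  proof
    assume "reach H u w" then show ?thesis using reach_mono by blast
  next
    assume "u \<in> C \<and> w \<in> C"
    then show ?thesis using toV reach_sym reach_trans by blast
  qed
qed

lemma card2_elem: "card e = 2 \<Longrightarrow> v \<in> e \<Longrightarrow> \<exists>s. s \<noteq> v \<and> e = {v,s}"
  by (auto simp: card_2_iff)

lemma finite_pairs: "finite V \<Longrightarrow> finite (pairs V)"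
  unfolding pairs_def by (rule finite_subset[of _ "Pow V"]) auto

lemma finite_RF: "finite V \<Longrightarrow> finite (RF V R)"
  unfolding RF_def by (rule finite_subset[of _ "Pow (pairs V)"]) (auto simp: finite_pairs)

lemma reach_in_V:
  assumes "E \<subseteq> pairs V" "reach E u w" "u \<noteq> w"
  shows "u \<in> V" "w \<in> V"
  using reach_end[OF assms(2,3)] reach_start[OF assms(2,3)] assms(1) by (auto simp: pairs_def)

lemma split_star:
  assumes Ep: "E \<subseteq> pairs V"
  shows "E = {e\<in>E. v \<notin> e} \<union> star v {s. {v,s} \<in> E}"
proof
  show "E \<subseteq> {e\<in>E. v \<notin> e} \<union> star v {s. {v,s} \<in> E}"
  proof
    fix e assume e: "e \<in> E"
    show "e \<in> {e\<in>E. v \<notin> e} \<union> star v {s. {v,s} \<in> E}"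
    proof (cases "v \<in> e")
      case True
      have "card e = 2" using e Ep unfolding pairs_def by blast
      obtain s where "e = {v,s}" using card2_elem[OF \<open>card e = 2\<close> True] by auto
      then have "s \<in> {s. {v,s} \<in> E}" using e by simp
      then have "e \<in> star v {s. {v,s} \<in> E}" unfolding star_def \<open>e = {v,s}\<close> by (rule imageI)
      then show ?thesis by simp
    next
      case False then show ?thesis using e by simp
    qed
  qed
next
  show "{e\<in>E. v \<notin> e} \<union> star v {s. {v,s} \<in> E} \<subseteq> E" unfolding star_def by auto
qed

lemma RF_del:
  fixes E :: "nat set set"
  assumes E: "E \<in> RF V R" and v: "v \<in> R" and RV: "R \<subseteq> V"
  defines "S \<equiv> {s. {v,s} \<in> E}" and "E' \<equiv> {e\<in>E. v \<notin> e}"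
  shows "S \<subseteq> V - R" "E' \<in> RF (V - {v}) ((R - {v}) \<union> S)" "E = E' \<union> star v S"
proof -
  have Ep: "E \<subseteq> pairs V" and Ea: "acyc E" and Er: "\<forall>u\<in>V. \<exists>!r\<in>R. reach E u r"
    using E unfolding RF_def by simp_all
  show ES: "E = E' \<union> star v S" unfolding E'_def S_def by (rule split_star[OF Ep])
  have H: "\<forall>e\<in>E'. v \<notin> e" by (simp add: E'_def)
  show SR: "S \<subseteq> V - R"
  proof
    fix s assume "s \<in> S"
    then have e: "{v,s} \<in> E" by (simp add: S_def)
    then have "card {v,s} = 2" "{v,s} \<subseteq> V" using Ep by (auto simp: pairs_def)
    then have "s \<noteq> v" "s \<in> V" by auto
    moreover have "s \<notin> R"
    proof
      assume "s \<in> R"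
      have "reach E s v" using reach_sym[OF reach_edge[OF e]] .
      moreover have "reach E s s" by simp
      moreover have "\<exists>!r\<in>R. reach E s r" using Er \<open>s \<in> V\<close> by simp
      ultimately show False using exu[of R "reach E s" s v] \<open>s \<in> R\<close> v \<open>s \<noteq> v\<close> by simp
    qed
    ultimately show "s \<in> V - R" by simp
  qed
  define C where "C = insert v {x. \<exists>s\<in>S. reach E' s x}"
  have rE: "reach E u w \<longleftrightarrow> reach E' u w \<or> (u \<in> C \<and> w \<in> C)" for u w
    using reach_star[OF H, of S u w] ES C_def by simp
  have "E' \<subseteq> pairs (V - {v})" using Ep by (auto simp: E'_def pairs_def)
  moreover have "acyc E'" using acyc_mono[OF Ea] ES by blast
  moreover have "\<forall>u\<in>V - {v}. \<exists>!r\<in>(R - {v}) \<union> S. reach E' u r"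
  proof
    fix u assume u: "u \<in> V - {v}"
    have "\<exists>!r\<in>R. reach E u r" using Er u by simp
    then obtain \<rho> where \<rho>: "\<rho> \<in> R" "reach E u \<rho>" by (rule ex1_bex)
    have ex: "\<exists>r\<in>(R - {v}) \<union> S. reach E' u r"
    proof (cases "reach E' u \<rho>")
      case True
      then have "\<rho> \<noteq> v" using reach_nov[OF H] u by blast
      then show ?thesis using True \<rho> by blast
    next
      case False
      then have "u \<in> C" using rE \<rho> by blast
      then obtain s where "s \<in> S" "reach E' s u" using u by (auto simp: C_def)
      then show ?thesis using reach_sym by blast
    qed
    have un: "a = b" if a: "a \<in> (R - {v}) \<union> S" "reach E' u a" and b: "b \<in> (R - {v}) \<union> S" "reach E' u b" for a b
    proof (rule ccontr)
      assume ne: "a \<noteq> b"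
      have ab: "reach E' a b" using reach_trans[OF reach_sym[OF a(2)] b(2)] .
      have abE: "reach E a b" using ab rE by blast
      have aV: "a \<in> V" "b \<in> V" using a b SR RV by auto
      have toV: "reach E x v" if "x \<in> S" for x
        using that reach_edge[of v x E] reach_sym by (auto simp: S_def)
      consider "a \<in> R - {v}" "b \<in> R - {v}" | "a \<in> R - {v}" "b \<in> S" | "a \<in> S" "b \<in> R - {v}" | "a \<in> S" "b \<in> S"
        using a b by blast
      then show False
      proof cases
        case 1
        from Er aV(1) have "\<exists>!r\<in>R. reach E a r" by simp
        then show ?thesis using 1 abE ne exu[of R "reach E a" a b] by simp
      next
        case 2
        then have "reach E a v" using abE toV reach_trans by blast
        moreover from Er aV(1) have "\<exists>!r\<in>R. reach E a r" by simp
        ultimately show ?thesis using 2 v exu[of R "reach E a" a v] by simp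
      next
        case 3
        then have "reach E b v" using abE toV reach_trans reach_sym by blast
        moreover from Er aV(2) have "\<exists>!r\<in>R. reach E b r" by simp
        ultimately show ?thesis using 3 v exu[of R "reach E b" b v] by simp
      next
        case 4
        have e: "{v,a} \<in> E" using 4 by (simp add: S_def)
        have "av": "a \<noteq> v" using SR 4 v by auto
        have vb: "{v,b} \<in> E" using 4 by (simp add: S_def)
        have vbne: "{v,b} \<noteq> {v,a}" using ne by (auto simp: doubleton_eq_iff)
        have sub: "E' \<union> {{v,b}} \<subseteq> E - {{v,a}}"
        proof
          fix e assume "e \<in> E' \<union> {{v,b}}"
          then show "e \<in> E - {{v,a}}"
          proof
            assume "e \<in> E'" then show ?thesis by (auto simp: E'_def)
          next
            assume "e \<in> {{v,b}}" then show ?thesis using vb vbne by simp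
          qed
        qed
        have r1: "reach (E' \<union> {{v,b}}) v b" by (rule reach_edge) simp
        have r2: "reach (E' \<union> {{v,b}}) b a" by (rule reach_mono[OF _ reach_sym[OF ab]]) blast
        have "reach (E' \<union> {{v,b}}) v a" by (rule reach_trans[OF r1 r2])
        then have "reach (E - {{v,a}}) v a" using reach_mono[OF sub] by blast
        then show ?thesis using Ea e av unfolding acyc_def by blast
      qed
    qed
    show "\<exists>!r\<in>(R - {v}) \<union> S. reach E' u r" using ex un by blast
  qed
  ultimately show "E' \<in> RF (V - {v}) ((R - {v}) \<union> S)" by (simp add: RF_def)
qed

lemma RF_add:
  assumes v: "v \<in> R" and RV: "R \<subseteq> V" and SR: "S \<subseteq> V - R"
    and E': "E' \<in> RF (V - {v}) ((R - {v}) \<union> S)"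
  shows "E' \<union> star v S \<in> RF V R" "{s. {v,s} \<in> E' \<union> star v S} = S"
    "{e \<in> E' \<union> star v S. v \<notin> e} = E'"
proof -
  have Ep: "E' \<subseteq> pairs (V - {v})" and Ea: "acyc E'"
    and Er: "\<forall>u\<in>V - {v}. \<exists>!r\<in>(R - {v}) \<union> S. reach E' u r"
    using E' unfolding RF_def by simp_all
  have H: "\<forall>e\<in>E'. v \<notin> e" using Ep by (auto simp: pairs_def)
  have sv: "s \<noteq> v" if "s \<in> S" for s using that SR v by auto
  show "{s. {v,s} \<in> E' \<union> star v S} = S"
    using H by (auto simp: star_def doubleton_eq_iff)
  show "{e \<in> E' \<union> star v S. v \<notin> e} = E'"
    using H by (auto simp: star_def)
  define E where "E = E' \<union> star v S"
  define C where "C = insert v {x. \<exists>s\<in>S. reach E' s x}"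
  have rE: "reach E u w \<longleftrightarrow> reach E' u w \<or> (u \<in> C \<and> w \<in> C)" for u w
    using reach_star[OF H, of S u w] E_def C_def by simp
  have uniq: "a = b" if "u \<in> V - {v}" "a \<in> (R - {v}) \<union> S" "reach E' u a"
    "b \<in> (R - {v}) \<union> S" "reach E' u b" for u a b
  proof -
    have "\<exists>!r\<in>(R - {v}) \<union> S. reach E' u r" using Er that(1) by simp
    then show ?thesis using exu[of "(R - {v}) \<union> S" "reach E' u" a b] that by simp
  qed
  have "star v S \<subseteq> pairs V"
    using SR v sv RV by (auto simp: star_def pairs_def card_insert_if)
  then have "E \<subseteq> pairs V"
    using Ep by (auto simp: E_def pairs_def)
  moreover have "acyc E"
    unfolding acyc_def
  proof (intro allI impI notI)
    fix x y assume xy: "{x,y} \<in> E" "x \<noteq> y" and r: "reach (E - {{x,y}}) x y"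
    show False
    proof (cases "{x,y} \<in> E'")
      case True
      define H' where "H' = E' - {{x,y}}"
      have H': "\<forall>e\<in>H'. v \<notin> e" using H by (simp add: H'_def)
      have xv: "x \<noteq> v" "y \<noteq> v" using H True by auto
      have xV: "x \<in> V - {v}" "y \<in> V - {v}" using Ep True by (auto simp: pairs_def)
      have "E - {{x,y}} = H' \<union> star v S" using xv by (auto simp: E_def H'_def star_def doubleton_eq_iff)
      then have "reach H' x y \<or> (x \<in> insert v {z. \<exists>s\<in>S. reach H' s z} \<and> y \<in> insert v {z. \<exists>s\<in>S. reach H' s z})"
        using reach_star[OF H', of S x y] r by simp
      then show False
      proof
        assume "reach H' x y" then show False using Ea True xy(2) by (simp add: acyc_def H'_def)
      next
        assume "x \<in> insert v {z. \<exists>s\<in>S. reach H' s z} \<and> y \<in> insert v {z. \<exists>s\<in>S. reach H' s z}"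
        then obtain s1 s2 where s: "s1 \<in> S" "reach H' s1 x" "s2 \<in> S" "reach H' s2 y" using xv by auto
        have "reach E' x s1" "reach E' y s2" using s reach_mono[of H' E'] reach_sym by (auto simp: H'_def)
        moreover have "reach E' x y" using True reach_edge by blast
        ultimately have "reach E' x s2" using reach_trans by blast
        then have "s1 = s2" using uniq[OF xV(1), of s1 s2] \<open>reach E' x s1\<close> s by blast
        then have "reach H' x y" using s reach_sym reach_trans by blast
        then show False using Ea True xy(2) by (simp add: acyc_def H'_def)
      qed
    next
      case False
      then obtain s where s: "s \<in> S" "{x,y} = {v,s}" using xy by (auto simp: E_def star_def)
      have "E - {{x,y}} = E' \<union> star v (S - {s})" using H s by (auto simp: E_def star_def doubleton_eq_iff)
      moreover have "reach (E - {{x,y}}) v s"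
      proof -
        have "x = v \<and> y = s \<or> x = s \<and> y = v" using s by (auto simp: doubleton_eq_iff)
        then show ?thesis
        proof
          assume "x = v \<and> y = s" then show ?thesis using r by simp
        next
          assume "x = s \<and> y = v" then show ?thesis using r reach_sym[of "E - {{x,y}}" x y] by simp
        qed
      qed
      ultimately have "reach (E' \<union> star v (S - {s})) v s" by simp
      then have "reach E' v s \<or> (s \<in> insert v {z. \<exists>s'\<in>S - {s}. reach E' s' z})"
        using reach_star[OF H, of "S - {s}" v s] by simp
      then show False
      proof
        assume "reach E' v s" then show False using reach_nov[OF H] reach_sym sv[OF s(1)] by blast
      next
        assume "s \<in> insert v {z. \<exists>s'\<in>S - {s}. reach E' s' z}"
        then obtain s' where "s' \<in> S" "s' \<noteq> s" "reach E' s' s" using sv[OF s(1)] by auto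
        moreover have "s \<in> V - {v}" using s(1) SR sv by auto
        ultimately show False using uniq[of s s s'] s(1) reach_sym by auto
      qed
    qed
  qed
  moreover have "\<forall>u\<in>V. \<exists>!r\<in>R. reach E u r"
  proof
    fix u assume u: "u \<in> V"
    have ex: "\<exists>r\<in>R. reach E u r"
    proof (cases "u = v")
      case True then show ?thesis using v reach_refl by blast
    next
      case False
      have "\<exists>!r\<in>(R - {v}) \<union> S. reach E' u r" using Er u False by simp
      then obtain \<rho> where \<rho>: "\<rho> \<in> (R - {v}) \<union> S" "reach E' u \<rho>" by (rule ex1_bex)
      then have rE\<rho>: "reach E u \<rho>" using rE by blast
      show ?thesis
      proof (cases "\<rho> \<in> S")
        case True
        then have "reach E \<rho> v" using reach_edge[of \<rho> v E] by (auto simp: E_def star_def insert_commute)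
        then show ?thesis using rE\<rho> reach_trans v by blast
      next
        case False then show ?thesis using \<rho> rE\<rho> by blast
      qed
    qed
    have un: "a = b" if a: "a \<in> R" "reach E u a" and b: "b \<in> R" "reach E u b" for a b
    proof (rule ccontr)
      assume ne: "a \<noteq> b"
      have "reach E a b" using a b reach_sym reach_trans by blast
      then have c: "reach E' a b \<or> (a \<in> C \<and> b \<in> C)" using rE by blast
      have inC: "False" if xx: "x \<in> C" "x \<noteq> v" "x \<in> R" for x
      proof -
        obtain s where s: "s \<in> S" "reach E' s x" using xx by (auto simp: C_def)
        have "s \<noteq> x" using s(1) SR xx by auto
        moreover have "x \<in> V - {v}" using xx RV by auto
        ultimately show False using uniq[of x x s] s xx reach_sym by auto
      qed
      from c show False
      proof
        assume ab: "reach E' a b"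
        have "a \<noteq> v" using reach_nov[OF H] reach_sym[OF ab] ne by blast
        moreover have "b \<noteq> v" using reach_nov[OF H] ab ne by blast
        ultimately show False using uniq[of a a b] ab a b RV ne by auto
      next
        assume "a \<in> C \<and> b \<in> C"
        then show False using inC a b ne by blast
      qed
    qed
    show "\<exists>!r\<in>R. reach E u r" using ex un by blast
  qed
  ultimately show "E' \<union> star v S \<in> RF V R" by (simp add: RF_def E_def)
qed


lemma RF_empty_roots: "V \<noteq> {} \<Longrightarrow> RF V {} = {}"
  unfolding RF_def by auto

lemma pairs_empty: "pairs {} = {}"
  unfolding pairs_def by auto

lemma RF_empty: "RF {} {} = {{}}"
  unfolding RF_def by (auto simp: pairs_empty acyc_def)

lemma RF_recursion:
  assumes fin: "finite V" and v: "v \<in> R" and RV: "R \<subseteq> V"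
  shows "card (RF V R) = (\<Sum>S\<in>Pow (V - R). card (RF (V - {v}) ((R - {v}) \<union> S)))"
proof -
  define f where "f = (\<lambda>(S, E'). E' \<union> star v S)"
  define A where "A = (SIGMA S:Pow (V - R). RF (V - {v}) ((R - {v}) \<union> S))"
  have img: "RF V R = f ` A"
  proof
    show "RF V R \<subseteq> f ` A"
    proof
      fix E assume E: "E \<in> RF V R"
      note d = RF_del[OF E v RV]
      have "({s. {v,s} \<in> E}, {e\<in>E. v \<notin> e}) \<in> A" using d(1,2) by (auto simp: A_def)
      moreover have "E = f ({s. {v,s} \<in> E}, {e\<in>E. v \<notin> e})" using d(3) by (simp add: f_def)
      ultimately show "E \<in> f ` A" by (rule rev_image_eqI)
    qed
  next
    show "f ` A \<subseteq> RF V R"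
    proof
      fix E assume "E \<in> f ` A"
      then obtain S E' where "S \<subseteq> V - R" "E' \<in> RF (V - {v}) ((R - {v}) \<union> S)" "E = E' \<union> star v S"
        by (auto simp: A_def f_def)
      then show "E \<in> RF V R" using RF_add(1)[OF v RV] by simp
    qed
  qed
  have inj: "inj_on f A"
  proof (rule inj_onI)
    fix p q assume p: "p \<in> A" and q: "q \<in> A" and eq: "f p = f q"
    obtain S E' where pp: "p = (S, E')" "S \<subseteq> V - R" "E' \<in> RF (V - {v}) ((R - {v}) \<union> S)"
      using p by (auto simp: A_def)
    obtain T F' where qq: "q = (T, F')" "T \<subseteq> V - R" "F' \<in> RF (V - {v}) ((R - {v}) \<union> T)"
      using q by (auto simp: A_def)
    have e: "E' \<union> star v S = F' \<union> star v T" using eq pp qq by (simp add: f_def)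
    have "S = T" using RF_add(2)[OF v RV pp(2,3)] RF_add(2)[OF v RV qq(2,3)] e by simp
    moreover have "E' = F'" using RF_add(3)[OF v RV pp(2,3)] RF_add(3)[OF v RV qq(2,3)] e by simp
    ultimately show "p = q" using pp qq by simp
  qed
  have "card (RF V R) = card A" using img inj by (simp add: card_image)
  also have "\<dots> = (\<Sum>S\<in>Pow (V - R). card (RF (V - {v}) ((R - {v}) \<union> S)))"
    unfolding A_def using fin by (intro card_SigmaI) (auto intro: finite_RF)
  finally show ?thesis .
qed

lemma sum_Pow_card:
  assumes "finite A"
  shows "(\<Sum>S\<in>Pow A. (f (card S) :: nat)) = (\<Sum>i\<le>card A. (card A choose i) * f i)"
proof -
  have im: "card ` Pow A = {..card A}"
  proof
    show "card ` Pow A \<subseteq> {..card A}" using assms by (auto intro: card_mono)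
    show "{..card A} \<subseteq> card ` Pow A"
    proof
      fix i assume "i \<in> {..card A}"
      then obtain B where "B \<subseteq> A" "card B = i" using obtain_subset_with_card_n by (metis atMost_iff)
      then show "i \<in> card ` Pow A" by auto
    qed
  qed
  have "(\<Sum>S\<in>Pow A. f (card S)) = (\<Sum>i\<in>card ` Pow A. \<Sum>S\<in>{S\<in>Pow A. card S = i}. f (card S))"
    using assms by (intro sum.image_gen) simp
  also have "\<dots> = (\<Sum>i\<le>card A. \<Sum>S\<in>{S\<in>Pow A. card S = i}. f i)"
    unfolding im by (intro sum.cong) auto
  also have "\<dots> = (\<Sum>i\<le>card A. (card A choose i) * f i)"
  proof (intro sum.cong refl)
    fix i
    have "{S\<in>Pow A. card S = i} = {S. S \<subseteq> A \<and> card S = i}" by auto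
    then show "(\<Sum>S\<in>{S\<in>Pow A. card S = i}. f i) = (card A choose i) * f i"
      using n_subsets[OF assms, of i] by simp
  qed
  finally show ?thesis .
qed

definition Fn :: "nat \<Rightarrow> nat \<Rightarrow> nat" where
  "Fn m r = (if r = 0 then (if m = 0 then 1 else 0) else if m = r then 1 else r * m ^ (m - r - 1))"

lemma binom_sum1: "(\<Sum>i\<le>n. (n choose i) * x ^ (n - i)) = (x + 1 :: nat) ^ n"
  using binomial_ring[of "1::nat" x n] by (simp add: add.commute)

lemma binom_sum2: "(\<Sum>i\<le>n. (n choose i) * i * x ^ (n - i)) = n * (x + 1 :: nat) ^ (n - 1)"
proof (cases n)
  case 0 then show ?thesis by simp
next
  case (Suc p)
  have "(\<Sum>i\<le>Suc p. (Suc p choose i) * i * x ^ (Suc p - i))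
      = (\<Sum>j\<le>p. (Suc p choose Suc j) * Suc j * x ^ (Suc p - Suc j))"
    by (subst sum.atMost_Suc_shift) simp
  also have "\<dots> = (\<Sum>j\<le>p. Suc p * ((p choose j) * x ^ (p - j)))"
  proof (intro sum.cong refl)
    fix j
    have "(Suc p choose Suc j) * Suc j = Suc p * (p choose j)"
      using Suc_times_binomial[of j p] by (simp add: mult.commute)
    then show "(Suc p choose Suc j) * Suc j * x ^ (Suc p - Suc j) = Suc p * ((p choose j) * x ^ (p - j))"
      by (metis diff_Suc_Suc mult.assoc)
  qed
  also have "\<dots> = Suc p * (\<Sum>j\<le>p. (p choose j) * x ^ (p - j))" by (rule sum_distrib_left[symmetric])
  also have "\<dots> = Suc p * (x + 1) ^ p" by (simp only: binom_sum1)
  finally show ?thesis using Suc by simp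
qed

lemma Fn_identity:
  assumes r: "r \<ge> 1" and n: "n \<ge> 1"
  shows "(\<Sum>i\<le>n. (n choose i) * Fn (r + n - 1) (r - 1 + i)) = r * (r + n) ^ (n - 1)"
proof -
  define x where "x = r + n - 1"
  have x1: "x \<ge> 1" using r n by (simp add: x_def)
  have tm: "Fn x (r - 1 + i) * x = (r - 1 + i) * x ^ (n - i)" if iin: "i \<le> n" for i
  proof -
    consider "r - 1 + i = 0" | "i = n" | "r - 1 + i \<noteq> 0" "i < n" using iin by (metis le_neq_implies_less)
    then show ?thesis
    proof cases
      case 1 then show ?thesis using x1 by (simp add: Fn_def)
    next
      case 2
      then have "x = r - 1 + i" using r by (simp add: x_def)
      then show ?thesis using 2 x1 by (simp add: Fn_def)
    next
      case 3
      have "x \<noteq> r - 1 + i" using 3 r by (simp add: x_def)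
      moreover have "x - (r - 1 + i) - 1 = n - i - 1" using r 3 by (simp add: x_def)
      moreover have "n - i = Suc (n - i - 1)" using 3 by simp
      ultimately show ?thesis using 3 by (simp add: Fn_def mult.commute mult.left_commute)
    qed
  qed
  have "(\<Sum>i\<le>n. (n choose i) * Fn x (r - 1 + i)) * x
      = (\<Sum>i\<le>n. (n choose i) * ((r - 1 + i) * x ^ (n - i)))"
    unfolding sum_distrib_right mult.assoc by (intro sum.cong refl) (metis atMost_iff tm)
  also have "\<dots> = (r - 1) * (\<Sum>i\<le>n. (n choose i) * x ^ (n - i)) + (\<Sum>i\<le>n. (n choose i) * i * x ^ (n - i))"
    by (simp add: sum_distrib_left sum.distrib[symmetric] algebra_simps)
  also have "\<dots> = (r - 1) * (x + 1) ^ n + n * (x + 1) ^ (n - 1)"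
    by (simp add: binom_sum1 binom_sum2)
  also have "\<dots> = ((r - 1) * (r + n) + n) * (r + n) ^ (n - 1)"
  proof -
    have "(x + 1) ^ n = (r + n) * (r + n) ^ (n - 1)" using n r
      by (simp add: x_def power_eq_if)
    then show ?thesis using r n by (simp add: x_def algebra_simps)
  qed
  also have "(r - 1) * (r + n) + n = r * x"
    using r n by (cases r) (simp_all add: x_def algebra_simps)
  finally have "(\<Sum>i\<le>n. (n choose i) * Fn x (r - 1 + i)) * x = (r * (r + n) ^ (n - 1)) * x"
    by (simp add: algebra_simps)
  then show ?thesis using x1 unfolding x_def by (metis mult_right_cancel not_one_le_zero)
qed

lemma card_RF: "finite V \<Longrightarrow> R \<subseteq> V \<Longrightarrow> card (RF V R) = Fn (card V) (card R)"
proof (induction "card V" arbitrary: V R)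
  case 0
  then have "V = {}" by simp
  then have "R = {}" using 0 by simp
  then show ?case using \<open>V = {}\<close> RF_empty by (simp add: Fn_def)
next
  case (Suc m)
  have Vne: "V \<noteq> {}" using Suc.hyps(2) by (metis card.empty nat.simps(3))
  show ?case
  proof (cases "R = {}")
    case True
    then show ?thesis using RF_empty_roots[OF Vne] Suc.hyps(2)[symmetric] by (simp add: Fn_def)
  next
    case False
    then obtain v where v: "v \<in> R" by blast
    have finR: "finite R" using Suc finite_subset by blast
    define n where "n = card (V - R)"
    have cV: "card V = card R + n" using Suc finR by (simp add: n_def card_Diff_subset card_mono)
    have r1: "card R \<ge> 1" using v finR by (simp add: Suc_le_eq card_gt_0_iff) blast
    have "card (RF V R) = (\<Sum>S\<in>Pow (V - R). card (RF (V - {v}) ((R - {v}) \<union> S)))"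
      by (rule RF_recursion[OF Suc(3) v Suc(4)])
    also have "\<dots> = (\<Sum>S\<in>Pow (V - R). Fn m (card R - 1 + card S))"
    proof (intro sum.cong refl)
      fix S assume S: "S \<in> Pow (V - R)"
      have "card (V - {v}) = m" using Suc v by auto
      moreover have "card ((R - {v}) \<union> S) = card R - 1 + card S"
      proof -
        have "finite S" using S Suc(3) finite_subset by auto
        moreover have "(R - {v}) \<inter> S = {}" using S by auto
        ultimately show ?thesis using finR v by (simp add: card_Un_disjoint)
      qed
      moreover have "(R - {v}) \<union> S \<subseteq> V - {v}" using S Suc(4) v by auto
      ultimately show "card (RF (V - {v}) ((R - {v}) \<union> S)) = Fn m (card R - 1 + card S)"
        using Suc(1)[of "V - {v}" "(R - {v}) \<union> S"] Suc(3) by simp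
    qed
    also have "\<dots> = (\<Sum>i\<le>n. (n choose i) * Fn m (card R - 1 + i))"
      unfolding n_def using Suc(3) by (subst sum_Pow_card) auto
    also have "\<dots> = Fn (card V) (card R)"
    proof (cases "n = 0")
      case True
      then have "m = card R - 1" using cV Suc(2) by simp
      then show ?thesis using True cV by (simp add: Fn_def)
    next
      case False
      have "m = card R + n - 1" using cV Suc(2) by simp
      then have "(\<Sum>i\<le>n. (n choose i) * Fn m (card R - 1 + i)) = card R * (card R + n) ^ (n - 1)"
        using Fn_identity[OF r1, of n] False by simp
      then show ?thesis using cV False r1 by (simp add: Fn_def)
    qed
    finally show ?thesis .
  qed
qed


definition compV :: "nat set \<Rightarrow> nat set set \<Rightarrow> nat \<Rightarrow> nat set" where
  "compV V E u = {w\<in>V. reach E u w}"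

lemma reach_supp: "E \<subseteq> pairs S \<Longrightarrow> reach E u w \<Longrightarrow> u \<noteq> w \<Longrightarrow> u \<in> S \<and> w \<in> S"
  using reach_in_V by blast

lemma reach_disj:
  assumes A: "A \<subseteq> pairs S" and B: "B \<subseteq> pairs T" and ST: "S \<inter> T = {}"
  shows "reach (A \<union> B) u w \<longleftrightarrow> reach A u w \<or> reach B u w"
proof
  assume "reach (A \<union> B) u w"
  then show "reach A u w \<or> reach B u w"
  proof (induction rule: reach_induct)
    case refl then show ?case by simp
  next
    case (step w w')
    have eS: "w \<in> S" if "{w,w'} \<in> A" using that A by (auto simp: pairs_def)
    have eT: "w \<in> T" if "{w,w'} \<in> B" using that B by (auto simp: pairs_def)
    from step(2) show ?case
    proof
      assume e: "{w,w'} \<in> A"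
      have "reach A u w"
      proof (cases "reach B u w")
        case True
        show ?thesis
        proof (cases "u = w")
          case True then show ?thesis by simp
        next
          case False
          then have "w \<in> T" using reach_supp[OF B \<open>reach B u w\<close>] by simp
          then show ?thesis using eS[OF e] ST by blast
        qed
      next
        case False then show ?thesis using step(3) by simp
      qed
      then show ?case using reach_trans[OF _ reach_edge[OF e]] by blast
    next
      assume e: "{w,w'} \<in> B"
      have "reach B u w"
      proof (cases "reach A u w")
        case True
        show ?thesis
        proof (cases "u = w")
          case True then show ?thesis by simp
        next
          case False
          then have "w \<in> S" using reach_supp[OF A \<open>reach A u w\<close>] by simp
          then show ?thesis using eT[OF e] ST by blast
        qed
      next
        case False then show ?thesis using step(3) by simp
      qed
      then show ?case using reach_trans[OF _ reach_edge[OF e]] by blast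
    qed
  qed
next
  assume "reach A u w \<or> reach B u w"
  then show "reach (A \<union> B) u w" using reach_mono[of A "A \<union> B"] reach_mono[of B "A \<union> B"] by blast
qed

lemma pairs_ne: "e \<in> pairs S \<Longrightarrow> e \<noteq> {}"
  by (auto simp: pairs_def)

lemma acyc_union:
  assumes A: "A \<subseteq> pairs S" and B: "B \<subseteq> pairs T" and ST: "S \<inter> T = {}"
    and aA: "acyc A" and aB: "acyc B"
  shows "acyc (A \<union> B)"
  unfolding acyc_def
proof (intro allI impI notI)
  fix x y assume e: "{x,y} \<in> A \<union> B" and ne: "x \<noteq> y" and r: "reach (A \<union> B - {{x,y}}) x y"
  from e show False
  proof
    assume eA: "{x,y} \<in> A"
    have xS: "x \<in> S" using eA A by (auto simp: pairs_def)
    have "{x,y} \<notin> B"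
    proof
      assume "{x,y} \<in> B" then have "x \<in> T" using B by (auto simp: pairs_def)
      then show False using xS ST by blast
    qed
    then have "B - {{x,y}} = B" by simp
    then have eq: "A \<union> B - {{x,y}} = (A - {{x,y}}) \<union> B" by (simp only: Un_Diff)
    have A': "A - {{x,y}} \<subseteq> pairs S" using A by blast
    have "reach (A - {{x,y}}) x y \<or> reach B x y"
      using r unfolding eq reach_disj[OF A' B ST] .
    then show False
    proof
      assume "reach (A - {{x,y}}) x y" then show False using aA eA ne unfolding acyc_def by blast
    next
      assume "reach B x y" then have "x \<in> T" using reach_supp[OF B] ne by blast
      then show False using xS ST by blast
    qed
  next
    assume eB: "{x,y} \<in> B"
    have xT: "x \<in> T" using eB B by (auto simp: pairs_def)
    have "{x,y} \<notin> A"
    proof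
      assume "{x,y} \<in> A" then have "x \<in> S" using A by (auto simp: pairs_def)
      then show False using xT ST by blast
    qed
    then have "A - {{x,y}} = A" by simp
    then have eq: "A \<union> B - {{x,y}} = A \<union> (B - {{x,y}})" by (simp only: Un_Diff)
    have B': "B - {{x,y}} \<subseteq> pairs T" using B by blast
    have "reach A x y \<or> reach (B - {{x,y}}) x y"
      using r unfolding eq reach_disj[OF A B' ST] .
    then show False
    proof
      assume "reach (B - {{x,y}}) x y" then show False using aB eB ne unfolding acyc_def by blast
    next
      assume "reach A x y" then have "x \<in> S" using reach_supp[OF A] ne by blast
      then show False using xT ST by blast
    qed
  qed
qed

lemma comp_disj:
  assumes A: "A \<subseteq> pairs S" and B: "B \<subseteq> pairs (V - S)" and u: "u \<in> V - S"
  shows "compV V (A \<union> B) u = compV (V - S) B u"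
proof -
  have rd: "reach (A \<union> B) u w \<longleftrightarrow> reach A u w \<or> reach B u w" for w
    using reach_disj[OF A B] by blast
  show ?thesis
  proof (intro set_eqI iffI)
    fix w assume "w \<in> compV V (A \<union> B) u"
    then have w: "w \<in> V" "reach A u w \<or> reach B u w" using rd by (auto simp: compV_def)
    from w(2) show "w \<in> compV (V - S) B u"
    proof
      assume "reach A u w"
      then have "u = w" using reach_supp[OF A] u by blast
      then show ?thesis using u by (simp add: compV_def)
    next
      assume "reach B u w"
      then have "w \<in> V - S" using reach_supp[OF B] u by (cases "u = w") auto
      then show ?thesis using \<open>reach B u w\<close> by (simp add: compV_def)
    qed
  next
    fix w assume "w \<in> compV (V - S) B u"
    then show "w \<in> compV V (A \<union> B) u" using rd by (auto simp: compV_def)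
  qed
qed

lemma ex1_bexI: "r \<in> R \<Longrightarrow> P r \<Longrightarrow> (\<And>a b. a \<in> R \<Longrightarrow> P a \<Longrightarrow> b \<in> R \<Longrightarrow> P b \<Longrightarrow> a = b) \<Longrightarrow> \<exists>!r\<in>R. P r"
  by blast

lemma card2_pair: "card e = 2 \<Longrightarrow> \<exists>x y. e = {x,y} \<and> x \<noteq> y"
  by (auto simp: card_2_iff)

lemma split_fwd:
  assumes E: "E \<in> RF V R" and RV: "R \<subseteq> V" and \<rho>: "\<rho> \<in> R"
  defines "S \<equiv> compV V E \<rho>"
  shows "E = {e\<in>E. e \<subseteq> S} \<union> {e\<in>E. e \<subseteq> V - S}"
    "{e\<in>E. e \<subseteq> S} \<in> RF S {\<rho>}" "{e\<in>E. e \<subseteq> V - S} \<in> RF (V - S) (R - {\<rho>})"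
    "\<rho> \<in> S" "S \<subseteq> V" "S \<inter> R = {\<rho>}"
proof -
  have Ep: "E \<subseteq> pairs V" and Ea: "acyc E" and Er: "\<forall>u\<in>V. \<exists>!r\<in>R. reach E u r"
    using E unfolding RF_def by simp_all
  define A where "A = {e\<in>E. e \<subseteq> S}"
  define B where "B = {e\<in>E. e \<subseteq> V - S}"
  show "S \<subseteq> V" by (auto simp: S_def compV_def)
  show \<rho>S: "\<rho> \<in> S" using \<rho> RV by (auto simp: S_def compV_def)
  show SR: "S \<inter> R = {\<rho>}"
  proof
    show "S \<inter> R \<subseteq> {\<rho>}"
    proof
      fix r assume r: "r \<in> S \<inter> R"
      then have "reach E \<rho> r" by (simp add: S_def compV_def)
      moreover have "\<exists>!r\<in>R. reach E \<rho> r" using Er \<rho> RV by auto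
      ultimately show "r \<in> {\<rho>}" using exu[of R "reach E \<rho>" r \<rho>] r \<rho> by simp
    qed
  qed (use \<rho>S \<rho> in auto)
  show EAB: "E = {e\<in>E. e \<subseteq> S} \<union> {e\<in>E. e \<subseteq> V - S}"
  proof
    show "E \<subseteq> {e\<in>E. e \<subseteq> S} \<union> {e\<in>E. e \<subseteq> V - S}"
    proof
      fix e assume e: "e \<in> E"
      then have "card e = 2" "e \<subseteq> V" using Ep by (auto simp: pairs_def)
      obtain x y where xy: "e = {x,y}" "x \<noteq> y" using card2_pair[OF \<open>card e = 2\<close>] by auto
      have rxy: "reach E x y" using e xy reach_edge by simp
      have xyV: "x \<in> V" "y \<in> V" using \<open>e \<subseteq> V\<close> xy by auto
      have "x \<in> S \<longleftrightarrow> y \<in> S"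
      proof
        assume "x \<in> S"
        then have "reach E \<rho> x" by (simp add: S_def compV_def)
        then have "reach E \<rho> y" using reach_trans rxy by blast
        then show "y \<in> S" using xyV by (simp add: S_def compV_def)
      next
        assume "y \<in> S"
        then have "reach E \<rho> y" by (simp add: S_def compV_def)
        then have "reach E \<rho> x" using reach_trans reach_sym[OF rxy] by blast
        then show "x \<in> S" using xyV by (simp add: S_def compV_def)
      qed
      then show "e \<in> {e\<in>E. e \<subseteq> S} \<union> {e\<in>E. e \<subseteq> V - S}"
        using e xy \<open>e \<subseteq> V\<close> by auto
    qed
  qed auto
  have Ap: "A \<subseteq> pairs S" using Ep by (auto simp: A_def pairs_def)
  have Bp: "B \<subseteq> pairs (V - S)" using Ep by (auto simp: B_def pairs_def)
  have rd: "reach E u w \<longleftrightarrow> reach A u w \<or> reach B u w" for u w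
    using reach_disj[OF Ap Bp] EAB by (simp add: A_def B_def)
  have "\<forall>u\<in>S. \<exists>!r\<in>{\<rho>}. reach A u r"
  proof
    fix u assume u: "u \<in> S"
    then have "reach E \<rho> u" by (simp add: S_def compV_def)
    then have "reach A \<rho> u \<or> reach B \<rho> u" using rd by simp
    then have "reach A \<rho> u"
    proof
      assume "reach B \<rho> u"
      then have "\<rho> = u" using reach_supp[OF Bp] \<rho>S by blast
      then show ?thesis by simp
    qed
    then show "\<exists>!r\<in>{\<rho>}. reach A u r" using reach_sym[OF \<open>reach A \<rho> u\<close>] by (intro ex1_bexI) auto
  qed
  moreover have "acyc A" by (rule acyc_mono[OF Ea]) (auto simp: A_def)
  ultimately show "{e\<in>E. e \<subseteq> S} \<in> RF S {\<rho>}"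
    unfolding RF_def A_def[symmetric] using Ap by simp
  have "\<forall>u\<in>V - S. \<exists>!r\<in>R - {\<rho>}. reach B u r"
  proof
    fix u assume u: "u \<in> V - S"
    have eu: "\<exists>!r\<in>R. reach E u r" using Er u by simp
    then obtain r where r: "r \<in> R" "reach E u r" by (rule ex1_bex)
    have "r \<noteq> \<rho>"
    proof
      assume "r = \<rho>"
      then have "u \<in> S" using r u reach_sym by (auto simp: S_def compV_def)
      then show False using u by simp
    qed
    have "reach A u r \<or> reach B u r" using rd[of u r] r(2) by simp
    then have "reach B u r"
    proof
      assume "reach A u r"
      then have "u = r" using reach_supp[OF Ap] u by blast
      then show ?thesis by simp
    qed
    moreover have "a = b" if "a \<in> R - {\<rho>}" "reach B u a" "b \<in> R - {\<rho>}" "reach B u b" for a b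
      using exu[OF eu, of a b] that rd by auto
    ultimately show "\<exists>!r\<in>R - {\<rho>}. reach B u r" using r \<open>r \<noteq> \<rho>\<close> by (intro ex1_bexI) auto
  qed
  moreover have "acyc B" by (rule acyc_mono[OF Ea]) (auto simp: B_def)
  ultimately show "{e\<in>E. e \<subseteq> V - S} \<in> RF (V - S) (R - {\<rho>})"
    unfolding RF_def B_def[symmetric] using Bp by simp
qed

lemma split_bwd:
  assumes RV: "R \<subseteq> V" and \<rho>S: "\<rho> \<in> S" and SV: "S \<subseteq> V" and SR: "S \<inter> R = {\<rho>}"
    and A: "A \<in> RF S {\<rho>}" and B: "B \<in> RF (V - S) (R - {\<rho>})"
  shows "A \<union> B \<in> RF V R" "compV V (A \<union> B) \<rho> = S"
    "{e\<in>A \<union> B. e \<subseteq> S} = A" "{e\<in>A \<union> B. e \<subseteq> V - S} = B"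
proof -
  have Ap: "A \<subseteq> pairs S" and Aa: "acyc A" and Ar: "\<forall>u\<in>S. \<exists>!r\<in>{\<rho>}. reach A u r"
    using A unfolding RF_def by simp_all
  have Bp: "B \<subseteq> pairs (V - S)" and Ba: "acyc B" and Br: "\<forall>u\<in>V - S. \<exists>!r\<in>R - {\<rho>}. reach B u r"
    using B unfolding RF_def by simp_all
  have dis: "S \<inter> (V - S) = {}" by blast
  have rd: "reach (A \<union> B) u w \<longleftrightarrow> reach A u w \<or> reach B u w" for u w
    using reach_disj[OF Ap Bp dis] by simp
  show "{e\<in>A \<union> B. e \<subseteq> S} = A"
  proof -
    have "\<not> e \<subseteq> S" if "e \<in> B" for e
      using that Bp pairs_ne[of e "V - S"] by (auto simp: pairs_def)
    then show ?thesis using Ap by (auto simp: pairs_def)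
  qed
  show "{e\<in>A \<union> B. e \<subseteq> V - S} = B"
  proof -
    have "\<not> e \<subseteq> V - S" if "e \<in> A" for e
      using that Ap pairs_ne[of e S] by (auto simp: pairs_def)
    then show ?thesis using Bp by (auto simp: pairs_def)
  qed
  have "A \<union> B \<subseteq> pairs V" using Ap Bp SV by (auto simp: pairs_def)
  moreover have "acyc (A \<union> B)" by (rule acyc_union[OF Ap Bp dis Aa Ba])
  moreover have "\<forall>u\<in>V. \<exists>!r\<in>R. reach (A \<union> B) u r"
  proof
    fix u assume u: "u \<in> V"
    have ex: "\<exists>r\<in>R. reach (A \<union> B) u r"
    proof (cases "u \<in> S")
      case True
      then have "reach A u \<rho>" using Ar by auto
      moreover have "\<rho> \<in> R" using SR by blast
      ultimately show ?thesis using rd by blast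
    next
      case False
      then have "\<exists>!r\<in>R - {\<rho>}. reach B u r" using Br u by simp
      then obtain r where "r \<in> R - {\<rho>}" "reach B u r" by (rule ex1_bex)
      then show ?thesis using rd by blast
    qed
    have "a = b" if a: "a \<in> R" "reach (A \<union> B) u a" and b: "b \<in> R" "reach (A \<union> B) u b" for a b
    proof (rule ccontr)
      assume ne: "a \<noteq> b"
      have "reach (A \<union> B) a b" using reach_trans[OF reach_sym[OF a(2)] b(2)] .
      then have "reach A a b \<or> reach B a b" using rd by simp
      then show False
      proof
        assume "reach A a b"
        then have "a \<in> S" "b \<in> S" using reach_supp[OF Ap] ne by blast+
        then have "a \<in> S \<inter> R" "b \<in> S \<inter> R" using a b by auto
        then have "a = \<rho>" "b = \<rho>" unfolding SR by auto
        then show False using ne by simp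
      next
        assume ab: "reach B a b"
        then have "a \<in> V - S" "b \<in> V - S" using reach_supp[OF Bp] ne by blast+
        then have "a \<in> R - {\<rho>}" "b \<in> R - {\<rho>}" using a b \<rho>S by auto
        moreover have "\<exists>!r\<in>R - {\<rho>}. reach B a r" using Br \<open>a \<in> V - S\<close> by simp
        ultimately show False using exu[of "R - {\<rho>}" "reach B a" a b] ab ne by simp
      qed
    qed
    moreover obtain r where "r \<in> R" "reach (A \<union> B) u r" using ex by blast
    ultimately show "\<exists>!r\<in>R. reach (A \<union> B) u r" by (intro ex1_bexI)
  qed
  ultimately show "A \<union> B \<in> RF V R" unfolding RF_def by simp
  show "compV V (A \<union> B) \<rho> = S"
  proof (intro set_eqI iffI)
    fix w assume "w \<in> compV V (A \<union> B) \<rho>"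
    then have w: "w \<in> V" "reach A \<rho> w \<or> reach B \<rho> w" using rd by (auto simp: compV_def)
    from w(2) show "w \<in> S"
    proof
      assume "reach A \<rho> w" then show ?thesis using reach_supp[OF Ap] \<rho>S by (cases "\<rho> = w") auto
    next
      assume "reach B \<rho> w" then show ?thesis using reach_supp[OF Bp] \<rho>S by (cases "\<rho> = w") auto
    qed
  next
    fix w assume w: "w \<in> S"
    then have "reach A w \<rho>" using Ar by auto
    then have "reach (A \<union> B) \<rho> w" using rd reach_sym by blast
    then show "w \<in> compV V (A \<union> B) \<rho>" using w SV by (auto simp: compV_def)
  qed
qed


fun Qc :: "(nat \<Rightarrow> nat) \<Rightarrow> nat \<Rightarrow> nat \<Rightarrow> nat \<Rightarrow> nat" where
  "Qc k m r 0 = Fn m r"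
| "Qc k m r (Suc N) = ((m - r) choose (k (Suc N) - 1)) * Fn (k (Suc N)) 1 * Qc k (m - k (Suc N)) (r - 1) N"

definition Sset :: "nat set \<Rightarrow> nat set \<Rightarrow> nat \<Rightarrow> nat \<Rightarrow> nat set set" where
  "Sset V R \<rho> c = {S. \<rho> \<in> S \<and> S \<subseteq> V \<and> S \<inter> R = {\<rho>} \<and> card S = c}"

lemma card_Sset:
  assumes fin: "finite V" and RV: "R \<subseteq> V" and \<rho>: "\<rho> \<in> R" and c: "c \<ge> 1"
  shows "card (Sset V R \<rho> c) = card (V - R) choose (c - 1)"
proof -
  have inj: "inj_on (\<lambda>S. S - {\<rho>}) (Sset V R \<rho> c)"
    by (rule inj_onI) (auto simp: Sset_def)
  have img: "(\<lambda>S. S - {\<rho>}) ` Sset V R \<rho> c = {T. T \<subseteq> V - R \<and> card T = c - 1}"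
  proof
    show "(\<lambda>S. S - {\<rho>}) ` Sset V R \<rho> c \<subseteq> {T. T \<subseteq> V - R \<and> card T = c - 1}"
    proof
      fix T assume "T \<in> (\<lambda>S. S - {\<rho>}) ` Sset V R \<rho> c"
      then obtain S where S: "S \<in> Sset V R \<rho> c" "T = S - {\<rho>}" by blast
      have "finite S" using S fin by (auto simp: Sset_def intro: finite_subset)
      then show "T \<in> {T. T \<subseteq> V - R \<and> card T = c - 1}" using S by (auto simp: Sset_def)
    qed
  next
    show "{T. T \<subseteq> V - R \<and> card T = c - 1} \<subseteq> (\<lambda>S. S - {\<rho>}) ` Sset V R \<rho> c"
    proof
      fix T assume T: "T \<in> {T. T \<subseteq> V - R \<and> card T = c - 1}"
      have "finite T" using T fin by (auto intro: finite_subset)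
      have "\<rho> \<notin> T" using T \<rho> by auto
      have "insert \<rho> T \<in> Sset V R \<rho> c"
        using T \<rho> RV c \<open>finite T\<close> \<open>\<rho> \<notin> T\<close> by (auto simp: Sset_def)
      moreover have "T = insert \<rho> T - {\<rho>}" using \<open>\<rho> \<notin> T\<close> by simp
      ultimately show "T \<in> (\<lambda>S. S - {\<rho>}) ` Sset V R \<rho> c" by (rule rev_image_eqI)
    qed
  qed
  have "card (Sset V R \<rho> c) = card {T. T \<subseteq> V - R \<and> card T = c - 1}"
    using card_image[OF inj] img by simp
  also have "\<dots> = card (V - R) choose (c - 1)" using fin by (simp add: n_subsets)
  finally show ?thesis .
qed

lemma finite_Sset: "finite V \<Longrightarrow> finite (Sset V R \<rho> c)"
  unfolding Sset_def by (rule finite_subset[of _ "Pow V"]) auto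

lemma count_main:
  assumes "finite V" "R \<subseteq> V" "{1..N} \<subseteq> R" "\<forall>i\<in>{1..N}. 1 \<le> k i"
  shows "card {E\<in>RF V R. \<forall>i\<in>{1..N}. card (compV V E i) = k i} = Qc k (card V) (card R) N"
  using assms
proof (induction N arbitrary: V R)
  case 0
  then show ?case using card_RF[of V R] by simp
next
  case (Suc N)
  note fin = Suc.prems(1) and RV = Suc.prems(2)
  define \<rho> where "\<rho> = Suc N"
  have \<rho>R: "\<rho> \<in> R" using Suc.prems(3) by (auto simp: \<rho>_def)
  have k1: "k \<rho> \<ge> 1" using Suc.prems(4) by (auto simp: \<rho>_def)
  define G where "G S = {B\<in>RF (V - S) (R - {\<rho>}). \<forall>i\<in>{1..N}. card (compV (V - S) B i) = k i}" for S
  define X where "X = {E\<in>RF V R. \<forall>i\<in>{1..Suc N}. card (compV V E i) = k i}"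
  define f where "f = (\<lambda>(S::nat set, A::nat set set, B::nat set set). A \<union> B)"
  define Y where "Y = (SIGMA S:Sset V R \<rho> (k \<rho>). RF S {\<rho>} \<times> G S)"
  have iVS: "i \<in> V - S" if "i \<in> {1..N}" "S \<inter> R = {\<rho>}" for i S
  proof -
    have "i \<in> R" "i \<noteq> \<rho>" using that Suc.prems(3) by (auto simp: \<rho>_def)
    moreover have "i \<notin> S"
    proof
      assume "i \<in> S" then have "i \<in> S \<inter> R" using \<open>i \<in> R\<close> by simp
      then show False using that(2) \<open>i \<noteq> \<rho>\<close> by simp
    qed
    ultimately show ?thesis using RV by auto
  qed
  have XY: "X = f ` Y"
  proof
    show "X \<subseteq> f ` Y"
    proof
      fix E assume E: "E \<in> X"
      then have ERF: "E \<in> RF V R" by (simp add: X_def)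
      define S where "S = compV V E \<rho>"
      note sp = split_fwd[OF ERF RV \<rho>R, folded S_def]
      define A where "A = {e\<in>E. e \<subseteq> S}"
      define B where "B = {e\<in>E. e \<subseteq> V - S}"
      have Ap: "A \<subseteq> pairs S" using sp(2) unfolding A_def RF_def by simp
      have Bp: "B \<subseteq> pairs (V - S)" using sp(3) unfolding B_def RF_def by simp
      have "card S = k \<rho>" using E by (simp add: X_def S_def \<rho>_def)
      then have SS: "S \<in> Sset V R \<rho> (k \<rho>)" using sp by (simp add: Sset_def)
      have "B \<in> G S"
      proof -
        have "card (compV (V - S) B i) = k i" if i: "i \<in> {1..N}" for i
        proof -
          have "compV V E i = compV V (A \<union> B) i" using sp(1) by (simp add: A_def B_def)
          also have "\<dots> = compV (V - S) B i" using comp_disj[OF Ap Bp iVS[OF i sp(6)]] .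
          moreover have "card (compV V E i) = k i" using E i by (simp add: X_def)
          ultimately show ?thesis by simp
        qed
        then show ?thesis using sp(3) by (simp add: G_def B_def)
      qed
      then have "(S, A, B) \<in> Y" using SS sp(2) by (simp add: Y_def A_def)
      moreover have "E = f (S, A, B)" using sp(1) by (simp add: f_def A_def B_def)
      ultimately show "E \<in> f ` Y" by (rule rev_image_eqI)
    qed
  next
    show "f ` Y \<subseteq> X"
    proof
      fix E assume "E \<in> f ` Y"
      then obtain S A B where SAB: "S \<in> Sset V R \<rho> (k \<rho>)" "A \<in> RF S {\<rho>}" "B \<in> G S" "E = A \<union> B"
        by (auto simp: Y_def f_def)
      have S: "\<rho> \<in> S" "S \<subseteq> V" "S \<inter> R = {\<rho>}" "card S = k \<rho>" using SAB(1) by (auto simp: Sset_def)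
      have BRF: "B \<in> RF (V - S) (R - {\<rho>})" using SAB(3) by (simp add: G_def)
      note sb = split_bwd[OF RV S(1,2,3) SAB(2) BRF]
      have Ap: "A \<subseteq> pairs S" using SAB(2) unfolding RF_def by simp
      have Bp: "B \<subseteq> pairs (V - S)" using BRF unfolding RF_def by simp
      have "card (compV V E i) = k i" if i: "i \<in> {1..Suc N}" for i
      proof (cases "i = Suc N")
        case True
        then show ?thesis using sb(2) S(4) SAB(4) by (simp add: \<rho>_def)
      next
        case False
        then have i': "i \<in> {1..N}" using i by auto
        have "compV V E i = compV (V - S) B i" using comp_disj[OF Ap Bp iVS[OF i' S(3)]] SAB(4) by simp
        then show ?thesis using SAB(3) i' by (simp add: G_def)
      qed
      then show "E \<in> X" using sb(1) SAB(4) by (simp add: X_def)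
    qed
  qed
  have inj: "inj_on f Y"
  proof (rule inj_onI)
    fix p q assume p: "p \<in> Y" and q: "q \<in> Y" and eq: "f p = f q"
    obtain S A B where pp: "p = (S, A, B)" by (cases p) auto
    obtain S' A' B' where qq: "q = (S', A', B')" by (cases q) auto
    have p': "S \<in> Sset V R \<rho> (k \<rho>)" "A \<in> RF S {\<rho>}" "B \<in> RF (V - S) (R - {\<rho>})"
      using p pp by (auto simp: Y_def G_def)
    have q': "S' \<in> Sset V R \<rho> (k \<rho>)" "A' \<in> RF S' {\<rho>}" "B' \<in> RF (V - S') (R - {\<rho>})"
      using q qq by (auto simp: Y_def G_def)
    have S1: "\<rho> \<in> S" "S \<subseteq> V" "S \<inter> R = {\<rho>}" using p'(1) by (auto simp: Sset_def)
    have S2: "\<rho> \<in> S'" "S' \<subseteq> V" "S' \<inter> R = {\<rho>}" using q'(1) by (auto simp: Sset_def)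
    note b1 = split_bwd[OF RV S1 p'(2,3)] and b2 = split_bwd[OF RV S2 q'(2,3)]
    have e: "A \<union> B = A' \<union> B'" using eq pp qq by (simp add: f_def)
    have "S = S'" using b1(2) b2(2) e by simp
    moreover have "A = A'" using b1(3) b2(3) e \<open>S = S'\<close> by simp
    moreover have "B = B'" using b1(4) b2(4) e \<open>S = S'\<close> by simp
    ultimately show "p = q" using pp qq by simp
  qed
  have finS: "finite S" if "S \<in> Sset V R \<rho> (k \<rho>)" for S
    using that fin by (auto simp: Sset_def intro: finite_subset)
  have finG: "finite (G S)" if "S \<in> Sset V R \<rho> (k \<rho>)" for S
    using fin finite_RF[of "V - S"] by (simp add: G_def)
  have "card X = card Y" using XY inj by (simp add: card_image)
  also have "\<dots> = (\<Sum>S\<in>Sset V R \<rho> (k \<rho>). card (RF S {\<rho>} \<times> G S))"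
    unfolding Y_def using finite_Sset[OF fin] finS finG finite_RF
    by (intro card_SigmaI) auto
  also have "\<dots> = (\<Sum>S\<in>Sset V R \<rho> (k \<rho>). Fn (k \<rho>) 1 * Qc k (card V - k \<rho>) (card R - 1) N)"
  proof (intro sum.cong refl)
    fix S assume SS: "S \<in> Sset V R \<rho> (k \<rho>)"
    have S: "\<rho> \<in> S" "S \<subseteq> V" "S \<inter> R = {\<rho>}" "card S = k \<rho>" using SS by (auto simp: Sset_def)
    have "card (RF S {\<rho>}) = Fn (k \<rho>) 1" using card_RF[OF finS[OF SS]] S by simp
    moreover have "card (G S) = Qc k (card V - k \<rho>) (card R - 1) N"
    proof -
      have "R - {\<rho>} \<subseteq> V - S" using RV S(3) by blast
      moreover have "{1..N} \<subseteq> R - {\<rho>}" using Suc.prems(3) by (auto simp: \<rho>_def)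
      moreover have "\<forall>i\<in>{1..N}. 1 \<le> k i" using Suc.prems(4) by simp
      ultimately have "card (G S) = Qc k (card (V - S)) (card (R - {\<rho>})) N"
        using Suc.IH[of "V - S" "R - {\<rho>}"] fin by (simp add: G_def)
      moreover have "card (V - S) = card V - k \<rho>" using S fin by (simp add: card_Diff_subset finS[OF SS])
      moreover have "card (R - {\<rho>}) = card R - 1" using \<rho>R by simp
      ultimately show ?thesis by simp
    qed
    ultimately show "card (RF S {\<rho>} \<times> G S) = Fn (k \<rho>) 1 * Qc k (card V - k \<rho>) (card R - 1) N"
      by (simp add: card_cartesian_product)
  qed
  also have "\<dots> = card (Sset V R \<rho> (k \<rho>)) * (Fn (k \<rho>) 1 * Qc k (card V - k \<rho>) (card R - 1) N)"
    by simp
  also have "\<dots> = Qc k (card V) (card R) (Suc N)"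
  proof -
    have fR: "finite R" using fin RV finite_subset by blast
    have "card (V - R) = card V - card R" using fin RV by (simp add: card_Diff_subset fR)
    then show ?thesis using card_Sset[OF fin RV \<rho>R k1] by (simp add: \<rho>_def)
  qed
  finally show ?case by (simp add: X_def)
qed


lemma graph_edges_pairs: "graph_edges n = pairs {1..n}"
  by (simp add: graph_edges_def pairs_def)

lemma component_compV: "component n E v = compV {1..n} E v"
  by (simp add: component_def compV_def)

lemma compV_eq: "reach E u w \<Longrightarrow> compV V E u = compV V E w"
  unfolding compV_def using reach_trans reach_sym by blast

lemma roots_iff:
  fixes E :: "nat set set"
  assumes TV: "T \<subseteq> V" and fin: "finite V"
  shows "(card (compV V E ` V) = card T \<and> (\<forall>i\<in>T. \<forall>j\<in>T. i \<noteq> j \<longrightarrow> \<not> reach E i j))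
     \<longleftrightarrow> (\<forall>u\<in>V. \<exists>!r\<in>T. reach E u r)"
proof
  assume a: "card (compV V E ` V) = card T \<and> (\<forall>i\<in>T. \<forall>j\<in>T. i \<noteq> j \<longrightarrow> \<not> reach E i j)"
  have pw: "i = j" if "i \<in> T" "j \<in> T" "reach E i j" for i j using a that by blast
  have inj: "inj_on (compV V E) T"
  proof (rule inj_onI)
    fix i j assume ij: "i \<in> T" "j \<in> T" "compV V E i = compV V E j"
    have "j \<in> compV V E j" using ij TV by (auto simp: compV_def)
    then have "j \<in> compV V E i" using ij(3) by simp
    then have "reach E i j" by (simp add: compV_def)
    then show "i = j" using pw ij by blast
  qed
  have sub: "compV V E ` T \<subseteq> compV V E ` V" using TV by blast
  have "card (compV V E ` T) = card T" using card_image[OF inj] .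
  then have eq: "compV V E ` T = compV V E ` V"
    using card_subset_eq[OF _ sub] fin a by simp
  show "\<forall>u\<in>V. \<exists>!r\<in>T. reach E u r"
  proof
    fix u assume u: "u \<in> V"
    then have "compV V E u \<in> compV V E ` T" using eq by blast
    then obtain r where r: "r \<in> T" "compV V E u = compV V E r" by blast
    then have "r \<in> compV V E u" using TV by (auto simp: compV_def)
    then have "reach E u r" by (simp add: compV_def)
    moreover have "a = b" if "a \<in> T" "reach E u a" "b \<in> T" "reach E u b" for a b
      using pw[of a b] that reach_sym reach_trans by blast
    ultimately show "\<exists>!r\<in>T. reach E u r" using r(1) by (intro ex1_bexI)
  qed
next
  assume a: "\<forall>u\<in>V. \<exists>!r\<in>T. reach E u r"
  have pw: "\<not> reach E i j" if "i \<in> T" "j \<in> T" "i \<noteq> j" for i j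
  proof
    assume "reach E i j"
    moreover have "\<exists>!r\<in>T. reach E i r" using a that TV by auto
    ultimately show False using exu[of T "reach E i" i j] that by simp
  qed
  have inj: "inj_on (compV V E) T"
  proof (rule inj_onI)
    fix i j assume ij: "i \<in> T" "j \<in> T" "compV V E i = compV V E j"
    have "j \<in> compV V E j" using ij TV by (auto simp: compV_def)
    then have "j \<in> compV V E i" using ij(3) by simp
    then have "reach E i j" by (simp add: compV_def)
    then show "i = j" using pw ij by blast
  qed
  have eq: "compV V E ` V = compV V E ` T"
  proof
    show "compV V E ` V \<subseteq> compV V E ` T"
    proof
      fix c assume "c \<in> compV V E ` V"
      then obtain u where u: "u \<in> V" "c = compV V E u" by blast
      have "\<exists>!r\<in>T. reach E u r" using a u by simp
      then obtain r where "r \<in> T" "reach E u r" by (rule ex1_bex)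
      then show "c \<in> compV V E ` T" using u compV_eq by blast
    qed
  qed (use TV in blast)
  show "card (compV V E ` V) = card T \<and> (\<forall>i\<in>T. \<forall>j\<in>T. i \<noteq> j \<longrightarrow> \<not> reach E i j)"
    using eq card_image[OF inj] pw by simp
qed

lemma forest_class_RF: "t \<le> n \<Longrightarrow> forest_class n t = RF {1..n} {1..t}"
proof -
  assume tn: "t \<le> n"
  have TV: "{1..t} \<subseteq> {1..n}" using tn by auto
  show ?thesis
  proof (intro set_eqI)
    fix E :: "nat set set"
    have c: "compV {1..n} E ` {1..n} = component n E ` {1..n}" by (simp add: component_compV)
    show "E \<in> forest_class n t \<longleftrightarrow> E \<in> RF {1..n} {1..t}"
      unfolding forest_class_def RF_def is_forest_def num_components_def graph_edges_pairs acyc_iff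
        mem_Collect_eq
      using roots_iff[OF TV, of E] c by simp
  qed
qed

lemma prob_eq:
  assumes "N \<le> t" "t \<le> n" "\<forall>i\<in>{1..N}. 1 \<le> k i"
  shows "comp_size_prob n t N k = real (Qc k n t N) / real (Fn n t)"
proof -
  have "{E \<in> forest_class n t. \<forall>i\<in>{1..N}. card (component n E i) = k i}
      = {E\<in>RF {1..n} {1..t}. \<forall>i\<in>{1..N}. card (compV {1..n} E i) = k i}"
    using forest_class_RF[OF assms(2)] by (simp add: component_compV)
  moreover have "card {E\<in>RF {1..n} {1..t}. \<forall>i\<in>{1..N}. card (compV {1..n} E i) = k i} = Qc k n t N"
    using count_main[of "{1..n}" "{1..t}" N k] assms by auto
  moreover have "card (forest_class n t) = Fn n t"
    using forest_class_RF[OF assms(2)] card_RF[of "{1..n}" "{1..t}"] assms(2) by simp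
  ultimately show ?thesis by (simp add: comp_size_prob_def)
qed


locale seqs =
  fixes m r :: "nat \<Rightarrow> nat"
  assumes hm: "filterlim m at_top sequentially"
    and hr: "filterlim r at_top sequentially"
    and h0: "((\<lambda>x. real (r x) / real (m x)) \<longlongrightarrow> 0) sequentially"
begin

lemma hmR: "filterlim (\<lambda>x. real (m x)) at_top sequentially"
  using filterlim_compose[OF filterlim_real_sequentially hm] by (simp add: o_def)

lemma hrR: "filterlim (\<lambda>x. real (r x)) at_top sequentially"
  using filterlim_compose[OF filterlim_real_sequentially hr] by (simp add: o_def)

lemma inv_m: "((\<lambda>x. c / real (m x)) \<longlongrightarrow> 0) sequentially"
  by (rule tendsto_divide_0[OF tendsto_const filterlim_at_top_imp_at_infinity[OF hmR]])

lemma inv_r: "((\<lambda>x. c / real (r x)) \<longlongrightarrow> 0) sequentially"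
  by (rule tendsto_divide_0[OF tendsto_const filterlim_at_top_imp_at_infinity[OF hrR]])

lemma ev_m: "eventually (\<lambda>x. c \<le> m x) sequentially"
  using hm unfolding filterlim_at_top by blast

lemma ev_r: "eventually (\<lambda>x. c \<le> r x) sequentially"
  using hr unfolding filterlim_at_top by blast

lemma ev_rm: "eventually (\<lambda>x. r x + c \<le> m x) sequentially"
proof -
  have "eventually (\<lambda>x. real (r x) / real (m x) < 1/2) sequentially"
    using order_tendstoD(2)[OF h0, of "1/2"] by simp
  moreover have "eventually (\<lambda>x. 2 * c + 2 \<le> m x) sequentially" by (rule ev_m)
  ultimately show ?thesis
  proof eventually_elim
    case (elim x)
    then have mpos: "real (m x) > 0" by simp
    then have "real (r x) < real (m x) / 2" using elim(1) by (simp add: field_simps)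
    moreover have "real (2 * c + 2) \<le> real (m x)" using elim(2) by linarith
    ultimately have "real (r x) + real c < real (m x)" by simp
    then show ?case by linarith
  qed
qed

lemma shift: "seqs (\<lambda>x. m x - K) (\<lambda>x. r x - 1)"
proof
  show "filterlim (\<lambda>x. m x - K) at_top sequentially"
    unfolding filterlim_at_top
  proof
    fix Z
    show "eventually (\<lambda>x. Z \<le> m x - K) sequentially"
      using ev_m[of "Z + K"] by eventually_elim simp
  qed
  show "filterlim (\<lambda>x. r x - 1) at_top sequentially"
    unfolding filterlim_at_top
  proof
    fix Z
    show "eventually (\<lambda>x. Z \<le> r x - 1) sequentially"
      using ev_r[of "Z + 1"] by eventually_elim simp
  qed
  show "((\<lambda>x. real (r x - 1) / real (m x - K)) \<longlongrightarrow> 0) sequentially"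
  proof (rule tendsto_sandwich[of "\<lambda>_. 0" _ _ "\<lambda>x. 2 * (real (r x) / real (m x))"])
    show "eventually (\<lambda>x. 0 \<le> real (r x - 1) / real (m x - K)) sequentially" by simp
    show "eventually (\<lambda>x. real (r x - 1) / real (m x - K) \<le> 2 * (real (r x) / real (m x))) sequentially"
      using ev_m[of "2 * K + 1"]
    proof eventually_elim
      case (elim x)
      have a: "real (m x - K) \<ge> real (m x) / 2" using elim by (simp add: of_nat_diff)
      have b: "real (m x - K) > 0" using elim by simp
      have "real (r x - 1) / real (m x - K) \<le> real (r x) / real (m x - K)"
        using b by (intro divide_right_mono) auto
      also have "\<dots> \<le> real (r x) / (real (m x) / 2)"
        using a elim by (intro divide_left_mono) auto
      also have "\<dots> = 2 * (real (r x) / real (m x))" by simp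
      finally show ?case .
    qed
    show "((\<lambda>x. 2 * (real (r x) / real (m x))) \<longlongrightarrow> 0) sequentially"
      using tendsto_mult[OF tendsto_const[of 2] h0] by simp
  qed simp
qed

end


context seqs
begin

lemma L2: "((\<lambda>x. (real (r x) - 1) / real (r x)) \<longlongrightarrow> 1) sequentially"
proof -
  have "((\<lambda>x. 1 - 1 / real (r x)) \<longlongrightarrow> 1 - 0) sequentially"
    by (intro tendsto_diff tendsto_const inv_r)
  then have l: "((\<lambda>x. 1 - 1 / real (r x)) \<longlongrightarrow> 1) sequentially" by simp
  moreover have "eventually (\<lambda>x. 1 - 1 / real (r x) = (real (r x) - 1) / real (r x)) sequentially"
    using ev_r[of 1] by eventually_elim (simp add: field_simps)
  then show ?thesis by (rule Lim_transform_eventually[OF l])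
qed

lemma L3: "((\<lambda>x. ((real (m x) - real K) / real (m x)) ^ (m x - K - r x)) \<longlongrightarrow> exp (- real K)) sequentially"
proof -
  define a where "a x = real (m x) - real K - real (r x)" for x
  define z where "z x = real K / real (m x)" for x
  have az: "((\<lambda>x. a x * z x) \<longlongrightarrow> real K) sequentially"
  proof -
    have "((\<lambda>x. real K - real K * (real K / real (m x)) - real K * (real (r x) / real (m x))) \<longlongrightarrow> real K - real K * 0 - real K * 0) sequentially"
      by (intro tendsto_intros inv_m h0)
    then have l: "((\<lambda>x. real K - real K * (real K / real (m x)) - real K * (real (r x) / real (m x))) \<longlongrightarrow> real K) sequentially"
      by simp
    moreover have "eventually (\<lambda>x. real K - real K * (real K / real (m x)) - real K * (real (r x) / real (m x)) = a x * z x) sequentially"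
      using ev_m[of 1] by eventually_elim (simp add: a_def z_def field_simps)
    ultimately show ?thesis by (rule Lim_transform_eventually)
  qed
  have az2: "((\<lambda>x. a x * z x * z x) \<longlongrightarrow> real K * 0) sequentially"
    by (intro tendsto_mult az) (unfold z_def, rule inv_m)
  have inner: "((\<lambda>x. a x * ln (1 - z x)) \<longlongrightarrow> - real K) sequentially"
  proof (rule tendsto_sandwich[of "\<lambda>x. - (a x * z x) - 2 * (a x * z x * z x)" _ _ "\<lambda>x. - (a x * z x)"])
    have ev: "eventually (\<lambda>x. 0 \<le> a x \<and> 0 \<le> z x \<and> z x \<le> 1/2) sequentially"
    proof -
      have "eventually (\<lambda>x. r x + 2 * K \<le> m x) sequentially" by (rule ev_rm)
      moreover have "eventually (\<lambda>x. 1 \<le> m x) sequentially" by (rule ev_m)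
      ultimately show ?thesis
      proof eventually_elim
        case (elim x)
        have m: "real (r x) + 2 * real K \<le> real (m x)" using elim(1) by linarith
        have mp: "real (m x) > 0" using elim(2) by simp
        have "0 \<le> a x" using m by (simp add: a_def)
        moreover have "0 \<le> z x" using mp by (simp add: z_def)
        moreover have "z x \<le> 1/2" using m mp by (simp add: z_def field_simps)
        ultimately show ?case by simp
      qed
    qed
    show "eventually (\<lambda>x. - (a x * z x) - 2 * (a x * z x * z x) \<le> a x * ln (1 - z x)) sequentially"
      using ev
    proof eventually_elim
      case (elim x)
      have "- z x - 2 * (z x)\<^sup>2 \<le> ln (1 - z x)" using ln_one_minus_pos_lower_bound[of "z x"] elim by simp
      then have "a x * (- z x - 2 * (z x)\<^sup>2) \<le> a x * ln (1 - z x)" using elim by (intro mult_left_mono) auto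
      then show ?case by (simp add: algebra_simps power2_eq_square)
    qed
    show "eventually (\<lambda>x. a x * ln (1 - z x) \<le> - (a x * z x)) sequentially"
      using ev
    proof eventually_elim
      case (elim x)
      have "ln (1 + (- z x)) \<le> - z x" using elim by (intro ln_add_one_self_le_self2) auto
      then have "a x * ln (1 - z x) \<le> a x * (- z x)" using elim by (intro mult_left_mono) auto
      then show ?case by simp
    qed
    show "((\<lambda>x. - (a x * z x) - 2 * (a x * z x * z x)) \<longlongrightarrow> - real K) sequentially"
      using tendsto_diff[OF tendsto_minus[OF az] tendsto_mult[OF tendsto_const[of 2] az2]] by simp
    show "((\<lambda>x. - (a x * z x)) \<longlongrightarrow> - real K) sequentially"
      using tendsto_minus[OF az] .
  qed
  have "((\<lambda>x. exp (a x * ln (1 - z x))) \<longlongrightarrow> exp (- real K)) sequentially"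
    by (rule tendsto_exp[OF inner])
  moreover have "eventually (\<lambda>x. exp (a x * ln (1 - z x)) = ((real (m x) - real K) / real (m x)) ^ (m x - K - r x)) sequentially"
  proof -
    have "eventually (\<lambda>x. r x + (K + 1) \<le> m x) sequentially" by (rule ev_rm)
    then show ?thesis
    proof eventually_elim
      case (elim x)
      have m: "real (r x) + real K + 1 \<le> real (m x)" using elim by linarith
      have mp: "real (m x) > 0" using m by linarith
      have pos: "(real (m x) - real K) / real (m x) > 0" using m mp by simp
      have e1: "1 - z x = (real (m x) - real K) / real (m x)" using mp by (simp add: z_def field_simps)
      have e2: "real (m x - K - r x) = a x" using elim by (simp add: a_def of_nat_diff)
      have "((real (m x) - real K) / real (m x)) ^ (m x - K - r x)
          = exp (ln (((real (m x) - real K) / real (m x)) ^ (m x - K - r x)))"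
        using pos by simp
      also have "\<dots> = exp (real (m x - K - r x) * ln ((real (m x) - real K) / real (m x)))"
        using pos by (simp add: ln_realpow)
      finally show ?case using e1 e2 by simp
    qed
  qed
  ultimately show ?thesis by (rule Lim_transform_eventually)
qed

end


lemma prod_fact: "(\<Prod>i=0..<j. real (j - i)) = fact j"
proof (induction j)
  case 0 then show ?case by simp
next
  case (Suc j)
  have "(\<Prod>i=0..<Suc j. real (Suc j - i)) = real (Suc j) * (\<Prod>i=0..<j. real (Suc j - Suc i))"
    by (subst prod.atLeast0_lessThan_Suc_shift) simp
  also have "\<dots> = real (Suc j) * fact j" using Suc by simp
  finally show ?case by simp
qed

context seqs
begin

lemma L1: "((\<lambda>x. real ((m x - r x) choose j) / real (m x) ^ j) \<longlongrightarrow> 1 / fact j) sequentially"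
proof -
  have fl: "((\<lambda>x. (real (m x - r x - i) / real (j - i)) / real (m x)) \<longlongrightarrow> 1 / real (j - i)) sequentially"
    if ij: "i \<in> {0..<j}" for i
  proof -
    have "((\<lambda>x. (1 - real (r x) / real (m x) - real i / real (m x)) / real (j - i)) \<longlongrightarrow> (1 - 0 - 0) / real (j - i)) sequentially"
      using ij by (intro tendsto_intros h0 inv_m) simp_all
    then have l: "((\<lambda>x. (1 - real (r x) / real (m x) - real i / real (m x)) / real (j - i)) \<longlongrightarrow> 1 / real (j - i)) sequentially"
      by simp
    have "eventually (\<lambda>x. (1 - real (r x) / real (m x) - real i / real (m x)) / real (j - i) = (real (m x - r x - i) / real (j - i)) / real (m x)) sequentially"
      using ev_rm[of "i + 1"]
    proof eventually_elim
      case (elim x)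
      then have mp: "real (m x) > 0" by simp
      have "real (m x - r x - i) = real (m x) - real (r x) - real i" using elim by (simp add: of_nat_diff)
      moreover have "real (j - i) > 0" using ij by simp
      ultimately show ?case using mp by (simp add: field_simps)
    qed
    then show ?thesis by (rule Lim_transform_eventually[OF l])
  qed
  have "((\<lambda>x. \<Prod>i=0..<j. (real (m x - r x - i) / real (j - i)) / real (m x)) \<longlongrightarrow> (\<Prod>i=0..<j. 1 / real (j - i))) sequentially"
    by (intro tendsto_prod fl)
  moreover have "(\<Prod>i=0..<j. 1 / real (j - i)) = 1 / fact j"
    using prod_fact[of j] by (simp add: prod_dividef)
  ultimately have l: "((\<lambda>x. \<Prod>i=0..<j. (real (m x - r x - i) / real (j - i)) / real (m x)) \<longlongrightarrow> 1 / fact j) sequentially"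
    by simp
  have "eventually (\<lambda>x. (\<Prod>i=0..<j. (real (m x - r x - i) / real (j - i)) / real (m x)) = real ((m x - r x) choose j) / real (m x) ^ j) sequentially"
    using ev_rm[of j]
  proof eventually_elim
    case (elim x)
    have "real ((m x - r x) choose j) = (\<Prod>i=0..<j. real (m x - r x - i) / real (j - i))"
      using elim by (intro binomial_altdef_of_nat) simp
    moreover have "real (m x) ^ j = (\<Prod>i=0..<j. real (m x))" by simp
    moreover have "(\<Prod>i=0..<j. (real (m x - r x - i) / real (j - i)) / real (m x))
       = (\<Prod>i=0..<j. real (m x - r x - i) / real (j - i)) / (\<Prod>i=0..<j. real (m x))"
      by (rule prod_dividef)
    ultimately show ?case by simp
  qed
  then show ?thesis by (rule Lim_transform_eventually[OF l])
qed

end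

definition stepv :: "nat \<Rightarrow> nat \<Rightarrow> nat \<Rightarrow> real" where
  "stepv K m r = real ((m - r) choose (K - 1)) * real (Fn K 1) * real (Fn (m - K) (r - 1)) / real (Fn m r)"

definition bor :: "nat \<Rightarrow> real" where
  "bor K = exp (- real K) * real K ^ (K - 1) / fact K"

lemma FnK1: "K \<ge> 1 \<Longrightarrow> real K * real (Fn K 1) = real K ^ (K - 1)"
proof -
  assume K: "K \<ge> 1"
  show ?thesis
  proof (cases "K = 1")
    case True then show ?thesis by (simp add: Fn_def)
  next
    case False
    then have "K - 1 = Suc (K - 1 - 1)" "K - 1 - 1 = K - 2" using K by auto
    then show ?thesis using False K by (simp add: Fn_def)
  qed
qed

context seqs
begin

lemma step_lim:
  assumes K: "K \<ge> 1"
  shows "((\<lambda>x. stepv K (m x) (r x)) \<longlongrightarrow> bor K) sequentially"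
proof -
  define P where "P x = (real ((m x - r x) choose (K - 1)) / real (m x) ^ (K - 1)) * real (Fn K 1)
     * ((real (r x) - 1) / real (r x)) * ((real (m x) - real K) / real (m x)) ^ (m x - K - r x)" for x
  have "(P \<longlongrightarrow> (1 / fact (K - 1)) * real (Fn K 1) * 1 * exp (- real K)) sequentially"
    unfolding P_def by (rule tendsto_mult[OF tendsto_mult[OF tendsto_mult[OF L1[of "K - 1"] tendsto_const] L2] L3])
  moreover have "(1 / fact (K - 1)) * real (Fn K 1) * 1 * exp (- real K) = bor K"
  proof -
    have f: "fact K = real K * fact (K - 1)" using K fact_reduce[of K] by simp
    have fp: "fact (K - 1) > (0::real)" by simp
    have Kp: "real K > 0" using K by simp
    show ?thesis unfolding bor_def f FnK1[OF K, symmetric] using fp Kp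
      by (simp add: field_simps)
  qed
  moreover have "eventually (\<lambda>x. P x = stepv K (m x) (r x)) sequentially"
    using ev_rm[of "K + 1"] ev_r[of 2]
  proof eventually_elim
    case (elim x)
    define M where "M = m x"
    define R where "R = r x"
    have R2: "R \<ge> 2" and MR: "R + (K + 1) \<le> M" using elim by (auto simp: M_def R_def)
    have F1: "real (Fn (M - K) (R - 1)) = (real R - 1) * (real M - real K) ^ (M - K - R)"
    proof -
      have "R - 1 \<noteq> 0" "M - K \<noteq> R - 1" using R2 MR by auto
      moreover have "M - K - (R - 1) - 1 = M - K - R" using R2 by simp
      ultimately have "Fn (M - K) (R - 1) = (R - 1) * (M - K) ^ (M - K - R)" by (simp add: Fn_def)
      then show ?thesis using R2 MR by (simp add: of_nat_diff)
    qed
    have F2: "real (Fn M R) = real R * (real M ^ (M - K - R) * real M ^ (K - 1))"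
    proof -
      have "R \<noteq> 0" "M \<noteq> R" using R2 MR by auto
      then have "Fn M R = R * M ^ (M - R - 1)" by (simp add: Fn_def)
      moreover have "M - R - 1 = (M - K - R) + (K - 1)" using MR K by simp
      ultimately show ?thesis by (simp add: power_add)
    qed
    have Mp: "real M > 0" "real R > 0" using R2 MR by auto
    show ?case
      unfolding P_def stepv_def M_def[symmetric] R_def[symmetric] F1 F2
      using Mp by (simp add: power_divide) (simp add: field_simps)
  qed
  ultimately show ?thesis by (metis Lim_transform_eventually)
qed

end


lemma main_lim:
  assumes "\<forall>i\<in>{1..N}. 1 \<le> k i" "seqs m r"
  shows "((\<lambda>x. real (Qc k (m x) (r x) N) / real (Fn (m x) (r x))) \<longlongrightarrow> (\<Prod>i\<in>{1..N}. bor (k i))) sequentially"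
  using assms
proof (induction N arbitrary: m r)
  case 0
  interpret seqs m r by (rule 0(2))
  have "eventually (\<lambda>x. 1 = real (Qc k (m x) (r x) 0) / real (Fn (m x) (r x))) sequentially"
    using ev_rm[of 1] ev_r[of 1]
  proof eventually_elim
    case (elim x)
    then have "Fn (m x) (r x) > 0" by (simp add: Fn_def)
    then show ?case by simp
  qed
  then show ?case by (simp add: Lim_transform_eventually[OF tendsto_const])
next
  case (Suc N)
  interpret seqs m r by (rule Suc.prems(2))
  define K where "K = k (Suc N)"
  have K: "K \<ge> 1" using Suc.prems(1) by (simp add: K_def)
  have sh: "seqs (\<lambda>x. m x - K) (\<lambda>x. r x - 1)" by (rule shift)
  have IH: "((\<lambda>x. real (Qc k (m x - K) (r x - 1) N) / real (Fn (m x - K) (r x - 1))) \<longlongrightarrow> (\<Prod>i\<in>{1..N}. bor (k i))) sequentially"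
    using Suc.IH[OF _ sh] Suc.prems(1) by simp
  have l: "((\<lambda>x. stepv K (m x) (r x) * (real (Qc k (m x - K) (r x - 1) N) / real (Fn (m x - K) (r x - 1))))
     \<longlongrightarrow> bor K * (\<Prod>i\<in>{1..N}. bor (k i))) sequentially"
    by (rule tendsto_mult[OF step_lim[OF K] IH])
  have eq: "bor K * (\<Prod>i\<in>{1..N}. bor (k i)) = (\<Prod>i\<in>{1..Suc N}. bor (k i))"
    by (simp add: prod.cl_ivl_Suc K_def mult.commute)
  have "eventually (\<lambda>x. stepv K (m x) (r x) * (real (Qc k (m x - K) (r x - 1) N) / real (Fn (m x - K) (r x - 1)))
      = real (Qc k (m x) (r x) (Suc N)) / real (Fn (m x) (r x))) sequentially"
    using ev_rm[of "K + 1"] ev_r[of 2]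
  proof eventually_elim
    case (elim x)
    have "Fn (m x - K) (r x - 1) > 0" using elim by (simp add: Fn_def)
    then have nz: "real (Fn (m x - K) (r x - 1)) \<noteq> 0" by simp
    show ?case using nz by (simp add: stepv_def K_def)
  qed
  then show ?case unfolding eq[symmetric] by (rule Lim_transform_eventually[OF l])
qed

theorem mainTheorem17:
  fixes t :: "nat \<Rightarrow> nat" and N :: nat and k :: "nat \<Rightarrow> nat"
  assumes "(\<lambda>n. real (t n)) \<in> o(\<lambda>n. real n)"
    and "filterlim t at_top sequentially"
    and "\<forall>i\<in>{1..N}. 1 \<le> k i"
  shows "(\<lambda>n. comp_size_prob n (t n) N k) \<sim>[sequentially]
         (\<lambda>n. \<Prod>i\<in>{1..N}. exp (- real (k i)) * real (k i) ^ (k i - 1) / fact (k i))"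
proof -
  have s: "seqs (\<lambda>n. n) t"
  proof
    show "filterlim (\<lambda>n. n) at_top sequentially" by (simp add: filterlim_ident)
    show "filterlim t at_top sequentially" by (rule assms(2))
    show "((\<lambda>x. real (t x) / real x) \<longlongrightarrow> 0) sequentially" using smalloD_tendsto[OF assms(1)] .
  qed
  interpret seqs "\<lambda>n. n" t by (rule s)
  have l: "((\<lambda>n. real (Qc k n (t n) N) / real (Fn n (t n))) \<longlongrightarrow> (\<Prod>i\<in>{1..N}. bor (k i))) sequentially"
    using main_lim[OF assms(3) s] .
  have "eventually (\<lambda>n. real (Qc k n (t n) N) / real (Fn n (t n)) = comp_size_prob n (t n) N k) sequentially"
    using ev_rm[of 0] ev_r[of N]
  proof eventually_elim
    case (elim n)
    then show ?case using prob_eq[of N "t n" n k] assms(3) by simp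
  qed
  then have l2: "((\<lambda>n. comp_size_prob n (t n) N k) \<longlongrightarrow> (\<Prod>i\<in>{1..N}. bor (k i))) sequentially"
    by (rule Lim_transform_eventually[OF l])
  have "(\<Prod>i\<in>{1..N}. bor (k i)) \<noteq> 0"
    using assms(3) by (auto simp: prod_zero_iff bor_def)
  then have "(\<lambda>n. comp_size_prob n (t n) N k) \<sim>[sequentially] (\<lambda>_. \<Prod>i\<in>{1..N}. bor (k i))"
    by (rule tendsto_imp_asymp_equiv_const[OF l2])
  then show ?thesis by (simp add: bor_def)
qed


end
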